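(* Let $q\ge4$. Assume (h), (R-q) with this $q$, ($\pi$-F) with some $p>2q$ and ($\pi$-T) with $p=2q$. Then $\sup_{h\in(0,h_0]}\sup_{t\in\pi_h}|\bar Y_t|^q\in L^1$, where $\bar Y=\bar Y(h)$ is the discrete approximation for stepsize $h$.
   Context: Let $(\Omega,\mathcal F,(\mathcal F_t)_{t\ge0},\mathbb P)$ be a filtered probability space whose filtration is generated by a $d$-dimensional Brownian motion $W$ and augmented by all $\mathbb P$-null sets; write $\mathbb E_t[\cdot]=\mathbb E[\cdot\mid\mathcal F_t]$. Let $\tau$ be a stopping time and let $L_f>0$ be a constant. For $h>0$ let $\pi_h=\{nh:n\in\mathbb N_0\}$. For each $h\in(0,h_0]$ there are given a finite $\pi_h$-valued stopping time $\tau_h$, an $\mathcal F_{\tau_h}$-measurable random variable $\bar\xi$ (depending on $h$), and a map $f_h:\pi_h\times\Omega\times\mathbb R\to\mathbb R$. The discrete approximation $(\bar Y_t)_{t\in\pi_h}$ is the solution of $\bar Y_t=1_{\{t\ge\tau_h\}}\bar\xi+1_{\{t<\tau_h\}}(\mathbb E_t[\bar Y_{t+h}]+hf_h(t,\bar Y_t))$, $t\in\pi_h$, given by $\bar Y_t=1_{\{t\ge\tau_h\}}\bar\xi+1_{\{t<\tau_h\}}\bar Y^*_t$, where $\bar Y^*$ is the unique fixed point of $T(R)_t=1_{\{t<\tau_h\}}\mathbb E_t[R_{t+h}]+1_{\{t<\tau_h\}}hf_h(t,R_t)+1_{\{t=\tau_h\}}\bar\xi$ in the Banach space of adapted sequences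 $(R_t)_{t\in\pi_h}$ with $R_t\in L^2(\mathcal F_t)$, $1_{\{t>\tau_h\}}R_t=0$ and $\sum_{t\in\pi_h}(1-3L_fh)^{-t/h}\|1_{\{t\le\tau_h\}}R_t\|_{L^2}<\infty$. Assumptions: (h) $h_0<\min\{L_f,\frac1{12L_f}\}$ and $h\in(0,h_0]$. (R-q) for a parameter $q\ge2$: there is $\rho>4qL_f$ with $\exp(\rho\tau)\in L^1$ and $\sup_{h\in(0,h_0]}\exp(\rho\tau_h)\in L^1$. ($\pi$-F) for a parameter $p$: each $f_h$ is Lipschitz in its last variable with the constant $L_f$, $f_h(t,A)$ is $\mathcal F_t$-measurable for every $\mathcal F_t$-measurable $A$, and $\mathbb E[\sup_{h\in(0,h_0]}\sup_{t\in\pi_h\cap[0,\tau\vee\tau_h]}|f_h(t,0)|^p]<\infty$. ($\pi$-T) for a parameter $p$: $\bar\xi$ is $\mathcal F_{\tau_h}$-measurable and $\mathbb E[\sup_{h\in(0,h_0]}|\bar\xi|^p]<\infty$. *)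

theory Defs
  imports "HOL-Probability.Probability"
begin

text \<open>Standard d-dimensional Brownian motion on the probability space M
  (the dimension d is the cardinality of the finite index type 'd).\<close>
definition brownian_motion :: "'a measure \<Rightarrow> (real \<Rightarrow> 'a \<Rightarrow> real ^ ('d::finite)) \<Rightarrow> bool" where
  "brownian_motion M W \<longleftrightarrow>
     (\<forall>t\<ge>0. W t \<in> borel_measurable M) \<and>
     (\<forall>\<omega>\<in>space M. W 0 \<omega> = 0) \<and>
     (\<forall>\<omega>\<in>space M. continuous_on {0..} (\<lambda>t. W t \<omega>)) \<and>
     (\<forall>s t. 0 \<le> s \<and> s < t \<longrightarrow>
        distributed M lborel (\<lambda>\<omega>. W t \<omega> - W s \<omega>)
          (\<lambda>x. ennreal (\<Prod>i\<in>UNIV. normal_density 0 (sqrt (t - s)) (x $ i)))) \<and>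
     (\<forall>(n::nat) (u::nat \<Rightarrow> real). u 0 \<ge> 0 \<and> (\<forall>k<n. u k < u (Suc k)) \<longrightarrow>
        prob_space.indep_vars M (\<lambda>_. borel) (\<lambda>k \<omega>. W (u (Suc k)) \<omega> - W (u k) \<omega>) {..<n})"

definition bm_filtration :: "'a measure \<Rightarrow> (real \<Rightarrow> 'a \<Rightarrow> real ^ ('d::finite)) \<Rightarrow> real \<Rightarrow> 'a measure" where
  "bm_filtration M W t = sigma (space M)
     ({W s -` A \<inter> space M | s A. 0 \<le> s \<and> s \<le> t \<and> A \<in> sets borel} \<union> null_sets M)"

definition grid :: "real \<Rightarrow> real set" where
  "grid h = {real n * h | n. True}"

text \<open>Ys is (a representative of) the unique fixed point of the map T in the
  weighted Banach space of adapted L^2 sequences described in the paper.\<close>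
definition disc_fixpoint ::
  "'a measure \<Rightarrow> (real \<Rightarrow> 'a measure) \<Rightarrow> real \<Rightarrow> real \<Rightarrow> ('a \<Rightarrow> real) \<Rightarrow> ('a \<Rightarrow> real)
    \<Rightarrow> (real \<Rightarrow> 'a \<Rightarrow> real \<Rightarrow> real) \<Rightarrow> (real \<Rightarrow> 'a \<Rightarrow> real) \<Rightarrow> bool" where
  "disc_fixpoint M F Lf h tauh xi f Ys \<longleftrightarrow>
     (\<forall>t\<in>grid h. Ys t \<in> borel_measurable (F t) \<and> integrable M (\<lambda>\<omega>. (Ys t \<omega>)\<^sup>2)) \<and>
     (\<forall>t\<in>grid h. AE \<omega> in M. t > tauh \<omega> \<longrightarrow> Ys t \<omega> = 0) \<and>
     summable (\<lambda>n::nat. (1 - 3 * Lf * h) powr (- real n) *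
        sqrt (\<integral>\<omega>. (indicator {\<omega>. real n * h \<le> tauh \<omega>} \<omega> * Ys (real n * h) \<omega>)\<^sup>2 \<partial>M)) \<and>
     (\<forall>t\<in>grid h. AE \<omega> in M. Ys t \<omega> =
        indicator {\<omega>. t < tauh \<omega>} \<omega> * real_cond_exp M (F t) (Ys (t + h)) \<omega>
        + indicator {\<omega>. t < tauh \<omega>} \<omega> * h * f t \<omega> (Ys t \<omega>)
        + indicator {\<omega>. t = tauh \<omega>} \<omega> * xi \<omega>)"

definition disc_approx :: "('a \<Rightarrow> real) \<Rightarrow> ('a \<Rightarrow> real) \<Rightarrow> (real \<Rightarrow> 'a \<Rightarrow> real) \<Rightarrow> real \<Rightarrow> 'a \<Rightarrow> real" where
  "disc_approx tauh xi Ys t \<omega> =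
     indicator {\<omega>. t \<ge> tauh \<omega>} \<omega> * xi \<omega> + indicator {\<omega>. t < tauh \<omega>} \<omega> * Ys t \<omega>"

end

theory Submission
  imports Defs "HOL-Probability.Probability"
begin


lemma int_ind:
  fixes f :: "'a \<Rightarrow> real"
  shows "A \<in> sets M \<Longrightarrow> integrable M f \<Longrightarrow> integrable M (\<lambda>x. indicator A x * f x)"
  using integrable_mult_indicator[of A M f] by simp

lemma geo_aux: "2 powr (a * real (Suc k)) / 2 ^ k = 2 powr a * (2 powr (a - 1)) ^ k"
proof -
  have "(2::real) ^ k = 2 powr real k" by (simp add: powr_realpow)
  then have "2 powr (a * real (Suc k)) / 2 ^ k = 2 powr (a * real (Suc k) - real k)"
    by (simp add: powr_diff)
  also have "a * real (Suc k) - real k = a + (a - 1) * real k" by (simp add: algebra_simps)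
  also have "2 powr (a + (a - 1) * real k) = 2 powr a * (2 powr (a - 1)) powr real k"
    by (simp add: powr_add powr_powr)
  also have "(2 powr (a - 1)) powr real k = (2 powr (a - 1)) ^ k" by (simp add: powr_realpow)
  finally show ?thesis .
qed

lemma dyadic: assumes "(x::real) > 1" shows "\<exists>k::nat. 2 ^ k < x \<and> x \<le> 2 ^ Suc k"
proof -
  define S where "S = {k::nat. 2 ^ k < x}"
  have "0 \<in> S" using assms by (simp add: S_def)
  have "S \<subseteq> {..<nat \<lceil>x\<rceil>}"
  proof
    fix k assume "k \<in> S"
    then have "2 ^ k < x" by (simp add: S_def)
    then have "real k < x" using of_nat_less_two_power[of k, where 'a=real] by linarith
    then show "k \<in> {..<nat \<lceil>x\<rceil>}" by (auto simp: less_ceiling_iff zless_nat_eq_int_zless)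
  qed
  then have fS: "finite S" by (rule finite_subset) auto
  define k where "k = Max S"
  have "k \<in> S" unfolding k_def using fS \<open>0 \<in> S\<close> by (intro Max_in) auto
  moreover have "Suc k \<notin> S" using Max_ge[OF fS, of "Suc k"] unfolding k_def by auto
  ultimately show ?thesis unfolding S_def by auto
qed

definition Dq :: "real set" where "Dq = {s. s \<in> \<rat> \<and> 0 \<le> s}"

lemma Dq_countable: "countable Dq"
  unfolding Dq_def by (rule countable_subset[OF _ countable_rat]) auto

lemma Dq_ne: "0 \<in> Dq" unfolding Dq_def by auto

locale bfilt = prob_space M for M :: "'a measure" +
  fixes F :: "real \<Rightarrow> 'a measure"
  assumes sub: "\<And>t. subalgebra M (F t)"
    and fmono: "\<And>s t. s \<le> t \<Longrightarrow> sets (F s) \<subseteq> sets (F t)"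
begin

lemma iind[simp, intro]: "A \<in> sets M \<Longrightarrow> integrable M (indicator A :: 'a \<Rightarrow> real)"
  by (rule integrable_real_indicator) (use emeasure_finite[of A] in \<open>auto simp: less_top[symmetric]\<close>)

lemma sfs: "sigma_finite_subalgebra M (F t)"
  apply (rule finite_measure_subalgebra_is_sigma_finite)
  unfolding finite_measure_subalgebra_def finite_measure_subalgebra_axioms_def
  using sub finite_measure_axioms by auto

lemma subFF: "s \<le> t \<Longrightarrow> subalgebra (F t) (F s)"
  using sub[of s] sub[of t] fmono[of s t] unfolding subalgebra_def by auto

lemma meas_mono: "s \<le> t \<Longrightarrow> f \<in> borel_measurable (F s) \<Longrightarrow> f \<in> borel_measurable (F t)"
  using measurable_from_subalg[OF subFF] by blast

lemma meas_M: "f \<in> borel_measurable (F s) \<Longrightarrow> f \<in> borel_measurable M"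
  using measurable_from_subalg[OF sub] by blast

lemma sets_FM: "A \<in> sets (F s) \<Longrightarrow> A \<in> sets M"
  using sub[of s] unfolding subalgebra_def by auto

lemma space_F[simp]: "space (F s) = space M"
  using sub[of s] unfolding subalgebra_def by auto

lemma trunc_tendsto:
  fixes g :: "'a \<Rightarrow> real"
  assumes g: "integrable M g"
  shows "(\<lambda>K::nat. \<integral>x. max (\<bar>g x\<bar> - real K) 0 \<partial>M) \<longlonglongrightarrow> 0"
proof -
  have gm[measurable]: "g \<in> borel_measurable M" using g by auto
  have "(\<lambda>K::nat. \<integral>x. max (\<bar>g x\<bar> - real K) 0 \<partial>M) \<longlonglongrightarrow> (\<integral>x. 0 \<partial>M)"
  proof (rule integral_dominated_convergence[where w="\<lambda>x. \<bar>g x\<bar>"])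
    show "integrable M (\<lambda>x. \<bar>g x\<bar>)" using g by auto
    show "AE x in M. (\<lambda>K::nat. max (\<bar>g x\<bar> - real K) 0) \<longlonglongrightarrow> 0"
    proof (rule AE_I2)
      fix x
      obtain K0 :: nat where "\<bar>g x\<bar> \<le> real K0" using real_arch_simple by blast
      then have "\<forall>K\<ge>K0. max (\<bar>g x\<bar> - real K) 0 = 0" by auto
      then have "eventually (\<lambda>K. max (\<bar>g x\<bar> - real K) 0 = 0) sequentially"
        unfolding eventually_sequentially by blast
      then show "(\<lambda>K::nat. max (\<bar>g x\<bar> - real K) 0) \<longlonglongrightarrow> 0"
        by (rule tendsto_eventually)
    qed
    show "\<And>i. AE x in M. norm (max (\<bar>g x\<bar> - real i) 0) \<le> \<bar>g x\<bar>" by auto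
  qed auto
  then show ?thesis by simp
qed

lemma abs_cont:
  fixes g :: "'a \<Rightarrow> real"
  assumes g: "integrable M g" and e: "e > 0"
  shows "\<exists>d>0. \<forall>A\<in>sets M. measure M A < d \<longrightarrow> (\<integral>x. indicator A x * \<bar>g x\<bar> \<partial>M) < e"
proof -
  have gm[measurable]: "g \<in> borel_measurable M" using g by auto
  have "\<forall>\<^sub>F K in sequentially. dist (\<integral>x. max (\<bar>g x\<bar> - real K) 0 \<partial>M) 0 < e/2"
    using trunc_tendsto[OF g] e by (intro tendstoD) auto
  then obtain K :: nat where "dist (\<integral>x. max (\<bar>g x\<bar> - real K) 0 \<partial>M) 0 < e/2"
    unfolding eventually_sequentially by blast
  then have K: "(\<integral>x. max (\<bar>g x\<bar> - real K) 0 \<partial>M) < e/2"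
    by (simp add: dist_real_def)
  define d where "d = e / (2 * (real K + 1))"
  have d: "d > 0" using e by (simp add: d_def)
  { fix A assume A[measurable]: "A \<in> sets M" and mA: "measure M A < d"
    have i1: "integrable M (\<lambda>x. max (\<bar>g x\<bar> - real K) 0)"
      by (rule Bochner_Integration.integrable_bound[where f="\<lambda>x. \<bar>g x\<bar>"]) (use g in auto)
    have "(\<integral>x. indicator A x * \<bar>g x\<bar> \<partial>M) \<le> (\<integral>x. real K * indicator A x + max (\<bar>g x\<bar> - real K) 0 \<partial>M)"
    proof (rule integral_mono)
      show "integrable M (\<lambda>x. indicator A x * \<bar>g x\<bar>)"
        using g A by (intro int_ind) auto
      show "integrable M (\<lambda>x. real K * indicator A x + max (\<bar>g x\<bar> - real K) 0)"
        using i1 by (intro Bochner_Integration.integrable_add) auto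
      fix x show "indicator A x * \<bar>g x\<bar> \<le> real K * indicator A x + max (\<bar>g x\<bar> - real K) 0"
        by (auto simp: indicator_def)
    qed
    also have "\<dots> = real K * measure M A + (\<integral>x. max (\<bar>g x\<bar> - real K) 0 \<partial>M)"
    proof -
      have "(\<integral>x. real K * indicator A x + max (\<bar>g x\<bar> - real K) 0 \<partial>M)
         = (\<integral>x. real K * indicator A x \<partial>M) + (\<integral>x. max (\<bar>g x\<bar> - real K) 0 \<partial>M)"
        using i1 A by (intro Bochner_Integration.integral_add) auto
      moreover have "(\<integral>x. real K * indicator A x \<partial>M) = real K * measure M A"
        using A by simp
      ultimately show ?thesis by simp
    qed
    also have "\<dots> < e"
    proof -
      have "real K * measure M A \<le> real K * d" using mA by (intro mult_left_mono) auto
      also have "\<dots> \<le> e/2" using e by (simp add: d_def field_simps)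
      finally show ?thesis using K by linarith
    qed
    finally have "(\<integral>x. indicator A x * \<bar>g x\<bar> \<partial>M) < e" .
  }
  then show ?thesis using d by blast
qed

lemma ce_meas_le: "s \<le> t \<Longrightarrow> real_cond_exp M (F s) Y \<in> borel_measurable (F t)"
  by (rule meas_mono) auto

lemma weak_finite:
  assumes Y: "integrable M Y" "AE x in M. Y x \<ge> 0" and T: "finite T" and l: "l > 0"
  shows "measure M (\<Union>d\<in>T. {x\<in>space M. real_cond_exp M (F d) Y x > l}) \<le> (\<integral>x. Y x \<partial>M) / l"
proof -
  define N where "N d = real_cond_exp M (F d) Y" for d
  have Nm: "d' \<le> d \<Longrightarrow> N d' \<in> borel_measurable (F d)" for d d' unfolding N_def by (rule ce_meas_le)
  have NM[measurable]: "N d \<in> borel_measurable M" for d unfolding N_def by simp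
  have Ym[measurable]: "Y \<in> borel_measurable M" using Y by auto
  define B where "B d = {x\<in>space M. N d x > l \<and> (\<forall>d'\<in>{d'\<in>T. d' < d}. N d' x \<le> l)}" for d
  have Bs: "B d \<in> sets (F d)" for d
  proof -
    have "Measurable.pred (F d) (\<lambda>x. N d x > l \<and> (\<forall>d'\<in>{d'\<in>T. d' < d}. N d' x \<le> l))"
    proof (intro pred_intros_logic pred_intros_finite(3))
      show "finite {d' \<in> T. d' < d}" using T by auto
      fix d' assume "d' \<in> {d' \<in> T. d' < d}"
      then have [measurable]: "N d' \<in> borel_measurable (F d)" using Nm by auto
      show "Measurable.pred (F d) (\<lambda>x. N d' x \<le> l)" by measurable
    next
      have [measurable]: "N d \<in> borel_measurable (F d)" using Nm by auto
      show "Measurable.pred (F d) (\<lambda>x. N d x > l)" by measurable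
    qed
    then show ?thesis unfolding pred_def B_def by simp
  qed
  have BM[measurable]: "B d \<in> sets M" for d using Bs sets_FM by blast
  have un: "(\<Union>d\<in>T. {x\<in>space M. N d x > l}) = (\<Union>d\<in>T. B d)"
  proof
    show "(\<Union>d\<in>T. B d) \<subseteq> (\<Union>d\<in>T. {x\<in>space M. N d x > l})" unfolding B_def by auto
    show "(\<Union>d\<in>T. {x\<in>space M. N d x > l}) \<subseteq> (\<Union>d\<in>T. B d)"
    proof
      fix x assume "x \<in> (\<Union>d\<in>T. {x\<in>space M. N d x > l})"
      then obtain d where d: "d \<in> T" "x \<in> space M" "N d x > l" by auto
      define S where "S = {d\<in>T. N d x > l}"
      have Sf: "finite S" "S \<noteq> {}" using T d unfolding S_def by auto
      define d0 where "d0 = Min S"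
      have "d0 \<in> S" using Sf unfolding d0_def by (rule Min_in)
      moreover have "\<forall>d'\<in>{d'\<in>T. d' < d0}. N d' x \<le> l"
      proof (intro ballI)
        fix d' assume "d' \<in> {d'\<in>T. d' < d0}"
        then have "d' \<notin> S" using Min_le[OF Sf(1)] unfolding d0_def by force
        then show "N d' x \<le> l" using \<open>d' \<in> {d'\<in>T. d' < d0}\<close> unfolding S_def by auto
      qed
      ultimately have "x \<in> B d0" using d unfolding B_def S_def by auto
      then show "x \<in> (\<Union>d\<in>T. B d)" using \<open>d0 \<in> S\<close> unfolding S_def by auto
    qed
  qed
  have disj: "d1 \<in> T \<Longrightarrow> d2 \<in> T \<Longrightarrow> x \<in> B d1 \<Longrightarrow> x \<in> B d2 \<Longrightarrow> d1 = d2" for d1 d2 x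
  proof (rule ccontr)
    assume a: "d1 \<in> T" "d2 \<in> T" "x \<in> B d1" "x \<in> B d2" "d1 \<noteq> d2"
    show False
    proof (cases "d1 < d2")
      case True then show False using a unfolding B_def by force
    next
      case False then have "d2 < d1" using a by auto
      then show False using a unfolding B_def by force
    qed
  qed
  have sum1: "(\<Sum>d\<in>T. indicator (B d) x) \<le> (1::real)" for x
  proof (cases "\<exists>d\<in>T. x \<in> B d")
    case False then show ?thesis by (simp add: indicator_def)
  next
    case True
    then obtain d0 where d0: "d0 \<in> T" "x \<in> B d0" by auto
    have "(\<Sum>d\<in>T. indicator (B d) x) = indicator (B d0) x + (\<Sum>d\<in>T-{d0}. indicator (B d) x)"
      using T d0 by (simp add: sum.remove)
    also have "(\<Sum>d\<in>T-{d0}. indicator (B d) x) = (0::real)"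
      by (rule sum.neutral) (use disj d0 in \<open>force simp: indicator_def\<close>)
    finally show ?thesis by (simp add: indicator_def)
  qed
  have each: "l * measure M (B d) \<le> (\<integral>x. indicator (B d) x * Y x \<partial>M)" for d
  proof -
    have "l * measure M (B d) = (\<integral>x. indicator (B d) x * l \<partial>M)" by simp
    also have "\<dots> \<le> (\<integral>x. indicator (B d) x * N d x \<partial>M)"
    proof (rule integral_mono)
      show "integrable M (\<lambda>x. indicator (B d) x * l)" by simp
      show "integrable M (\<lambda>x. indicator (B d) x * N d x)"
        unfolding N_def by (intro int_ind) (auto intro: sigma_finite_subalgebra.real_cond_exp_int[OF sfs] Y)
      fix x assume "x \<in> space M" then show "indicator (B d) x * l \<le> indicator (B d) x * N d x"
        unfolding B_def by (auto simp: indicator_def)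
    qed
    also have "\<dots> = (\<integral>x. indicator (B d) x * Y x \<partial>M)"
      unfolding N_def
      by (rule sigma_finite_subalgebra.real_cond_exp_intg(2)[OF sfs]) (use Y Bs in \<open>auto intro: int_ind\<close>)
    finally show ?thesis .
  qed
  have "l * measure M (\<Union>d\<in>T. {x\<in>space M. N d x > l}) = l * measure M (\<Union>d\<in>T. B d)" by (simp add: un)
  also have "\<dots> \<le> l * (\<Sum>d\<in>T. measure M (B d))"
    using l T by (intro mult_left_mono measure_UNION_le) auto
  also have "\<dots> = (\<Sum>d\<in>T. l * measure M (B d))" by (simp add: sum_distrib_left)
  also have "\<dots> \<le> (\<Sum>d\<in>T. \<integral>x. indicator (B d) x * Y x \<partial>M)" by (intro sum_mono each)
  also have "\<dots> = (\<integral>x. (\<Sum>d\<in>T. indicator (B d) x * Y x) \<partial>M)"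
    by (rule Bochner_Integration.integral_sum[symmetric]) (use Y in \<open>auto intro: int_ind\<close>)
  also have "\<dots> \<le> (\<integral>x. Y x \<partial>M)"
  proof (rule integral_mono_AE)
    show "integrable M (\<lambda>x. \<Sum>d\<in>T. indicator (B d) x * Y x)"
      using Y by (intro Bochner_Integration.integrable_sum int_ind) auto
    show "integrable M Y" using Y by simp
    show "AE x in M. (\<Sum>d\<in>T. indicator (B d) x * Y x) \<le> Y x"
      using Y(2)
    proof (eventually_elim)
      case (elim x)
      have "(\<Sum>d\<in>T. indicator (B d) x * Y x) = (\<Sum>d\<in>T. indicator (B d) x) * Y x"
        by (simp add: sum_distrib_right)
      also have "\<dots> \<le> 1 * Y x" using sum1[of x] elim by (intro mult_right_mono) auto
      finally show ?case by simp
    qed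
  qed
  finally show ?thesis using l unfolding N_def by (simp add: field_simps)
qed

lemma weak_countable:
  assumes Y: "integrable M Y" "AE x in M. Y x \<ge> 0" and l: "l > 0"
  shows "{x\<in>space M. \<exists>d\<in>Dq. real_cond_exp M (F d) Y x > l} \<in> sets M"
    and "measure M {x\<in>space M. \<exists>d\<in>Dq. real_cond_exp M (F d) Y x > l} \<le> (\<integral>x. Y x \<partial>M) / l"
proof -
  define N where "N d = real_cond_exp M (F d) Y" for d
  have NM[measurable]: "N d \<in> borel_measurable M" for d unfolding N_def by simp
  define e where "e = from_nat_into Dq"
  have re: "range e = Dq" unfolding e_def using Dq_ne Dq_countable by (intro range_from_nat_into) auto
  define U where "U n = (\<Union>j\<in>{..n}. {x\<in>space M. N (e j) x > l})" for n
  have Us: "U n \<in> sets M" for n unfolding U_def by measurable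
  have inc: "incseq U" unfolding U_def incseq_def by (auto; meson atMost_iff order_trans)
  have eq: "{x\<in>space M. \<exists>d\<in>Dq. N d x > l} = (\<Union>n. U n)"
    unfolding U_def using re by (auto; metis atMost_iff order_refl rangeE)+
  show "{x\<in>space M. \<exists>d\<in>Dq. real_cond_exp M (F d) Y x > l} \<in> sets M"
    using eq Us unfolding N_def by auto
  have "(\<lambda>n. measure M (U n)) \<longlonglongrightarrow> measure M (\<Union>n. U n)"
    using Us inc by (intro finite_Lim_measure_incseq) auto
  moreover have "measure M (U n) \<le> (\<integral>x. Y x \<partial>M) / l" for n
  proof -
    have "U n = (\<Union>d\<in>e ` {..n}. {x\<in>space M. N d x > l})" unfolding U_def by auto
    then show ?thesis using weak_finite[OF Y _ l, of "e ` {..n}"] unfolding N_def by simp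
  qed
  ultimately have "measure M (\<Union>n. U n) \<le> (\<integral>x. Y x \<partial>M) / l"
    by (intro LIMSEQ_le_const2) auto
  then show "measure M {x\<in>space M. \<exists>d\<in>Dq. real_cond_exp M (F d) Y x > l} \<le> (\<integral>x. Y x \<partial>M) / l"
    using eq unfolding N_def by simp
qed

lemma lc_step:
  assumes LC: "\<And>A e. A \<in> sets (F t) \<Longrightarrow> e > 0 \<Longrightarrow>
          \<exists>s\<in>Dq. s < t \<and> (\<exists>A'\<in>sets (F s). measure M ((A - A') \<union> (A' - A)) < e)"
    and t: "t > 0"
    and Y: "integrable M Y"
  shows "AE x in M. real_cond_exp M (F t) Y x > l \<longrightarrow> (\<exists>d\<in>Dq. d < t \<and> real_cond_exp M (F d) Y x > l)"
proof -
  define N where "N d = real_cond_exp M (F d) Y" for d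
  have NM[measurable]: "N d \<in> borel_measurable M" for d unfolding N_def by simp
  have Ym[measurable]: "Y \<in> borel_measurable M" using Y by auto
  have Nint: "integrable M (N d)" for d
    unfolding N_def by (rule sigma_finite_subalgebra.real_cond_exp_int(1)[OF sfs Y])
  define Dt where "Dt = {d\<in>Dq. d < t}"
  have Dt_ne: "Dt \<noteq> {}" using Dq_ne t unfolding Dt_def by auto
  have Dt_c: "countable Dt" using Dq_countable unfolding Dt_def by auto
  define et where "et = from_nat_into Dt"
  have ret: "range et = Dt" unfolding et_def using Dt_ne Dt_c by simp
  have etD: "et j \<in> Dt" for j using ret by auto
  have etle: "et j \<le> t" for j using etD[of j] unfolding Dt_def by auto
  define C where "C = {x\<in>space M. \<forall>j. N (et j) x \<le> l}"
  define Cm where "Cm m = {x\<in>space M. \<forall>j\<in>{..m}. N (et j) x \<le> l}" for m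
  define B where "B = {x\<in>space M. N t x > l} \<inter> C"
  have CM[measurable]: "C \<in> sets M" unfolding C_def by measurable
  have CmM[measurable]: "Cm m \<in> sets M" for m unfolding Cm_def by measurable
  have BF: "B \<in> sets (F t)"
  proof -
    have [measurable]: "N (et j) \<in> borel_measurable (F t)" for j
      unfolding N_def using etle by (intro ce_meas_le) 
    have [measurable]: "N t \<in> borel_measurable (F t)" unfolding N_def by simp
    have "Measurable.pred (F t) (\<lambda>x. N t x > l \<and> (\<forall>j. N (et j) x \<le> l))" by measurable
    moreover have "B = {x\<in>space (F t). N t x > l \<and> (\<forall>j. N (et j) x \<le> l)}"
      unfolding B_def C_def by auto
    ultimately show ?thesis unfolding pred_def by simp
  qed
  have BM[measurable]: "B \<in> sets M" using BF sets_FM by blast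
  define Psi where "Psi A = (\<integral>x. indicator A x * (Y x - l) \<partial>M)" for A
  have Psi_B: "Psi B = (\<integral>x. indicator B x * (N t x - l) \<partial>M)"
  proof -
    have i1: "integrable M (\<lambda>x. indicator B x * Y x)" using Y by (intro int_ind) auto
    have i2: "integrable M (\<lambda>x. indicator B x * N t x)" using Nint by (intro int_ind) auto
    have "Psi B = (\<integral>x. indicator B x * Y x \<partial>M) - l * measure M B"
      unfolding Psi_def using i1 by (simp add: right_diff_distrib Bochner_Integration.integral_diff)
    also have "(\<integral>x. indicator B x * Y x \<partial>M) = (\<integral>x. indicator B x * N t x \<partial>M)"
      unfolding N_def
      by (rule sigma_finite_subalgebra.real_cond_exp_intg(2)[OF sfs, symmetric]) (use Y BF i1 in auto)
    also have "(\<integral>x. indicator B x * N t x \<partial>M) - l * measure M B = (\<integral>x. indicator B x * (N t x - l) \<partial>M)"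
      using i2 by (simp add: right_diff_distrib Bochner_Integration.integral_diff)
    finally show ?thesis .
  qed
  have small: "Psi B < e" if e: "e > 0" for e
  proof -
    have gi: "integrable M (\<lambda>x. Y x - l)" using Y by auto
    obtain d where d: "d > 0" "\<And>A. A \<in> sets M \<Longrightarrow> measure M A < d \<Longrightarrow> (\<integral>x. indicator A x * \<bar>Y x - l\<bar> \<partial>M) < e"
      using abs_cont[OF gi e] by blast
    obtain s0 A' where s0: "s0 \<in> Dq" "s0 < t" and A': "A' \<in> sets (F s0)" "measure M ((B - A') \<union> (A' - B)) < d/2"
      using LC[OF BF, of "d/2"] d by auto
    have A'M[measurable]: "A' \<in> sets M" using A' sets_FM by blast
    have "(\<lambda>m. measure M (Cm m)) \<longlonglongrightarrow> measure M (\<Inter>m. Cm m)"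
      by (rule finite_Lim_measure_decseq) (auto simp: decseq_def Cm_def)
    moreover have "(\<Inter>m. Cm m) = C" unfolding Cm_def C_def by auto
    ultimately have "(\<lambda>m. measure M (Cm m)) \<longlonglongrightarrow> measure M C" by simp
    then obtain m where m: "dist (measure M (Cm m)) (measure M C) < d/2"
      using d unfolding lim_sequentially by (metis half_gt_zero order_refl)
    have CCm: "C \<subseteq> Cm m" unfolding C_def Cm_def by auto
    have mdiff: "measure M (Cm m - C) < d/2"
      using m finite_measure_Diff[OF CmM CM CCm] finite_measure_mono[OF CCm CmM]
      by (simp add: dist_real_def)
    define U where "U = insert s0 (et ` {..m})"
    have Uf: "finite U" "U \<noteq> {}" unfolding U_def by auto
    define u where "u = Max U"
    have uU: "u \<in> U" unfolding u_def using Uf by (rule Max_in)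
    have uDt: "u \<in> Dt" using uU etD s0 unfolding U_def Dt_def by auto
    have s0u: "s0 \<le> u" unfolding u_def using Uf U_def by auto
    have etu: "j \<le> m \<Longrightarrow> et j \<le> u" for j unfolding u_def
      by (rule Max_ge[OF Uf(1)]) (auto simp: U_def)
    obtain ju where ju: "et ju = u" using uDt ret by (metis rangeE)
    define B' where "B' = A' \<inter> Cm m \<inter> {x\<in>space M. N u x \<le> l}"
    have B'F: "B' \<in> sets (F u)"
    proof -
      have [measurable]: "N (et j) \<in> borel_measurable (F u)" if "j \<in> {..m}" for j
        unfolding N_def using etu that by (intro ce_meas_le) auto
      have [measurable]: "N u \<in> borel_measurable (F u)" unfolding N_def by simp
      have "Measurable.pred (F u) (\<lambda>x. (\<forall>j\<in>{..m}. N (et j) x \<le> l) \<and> N u x \<le> l)"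
        by (intro pred_intros_logic pred_intros_finite(3)) (auto simp del: atMost_iff)
      then have "{x\<in>space M. (\<forall>j\<in>{..m}. N (et j) x \<le> l) \<and> N u x \<le> l} \<in> sets (F u)"
        unfolding pred_def by simp
      moreover have "A' \<in> sets (F u)" using A' fmono[OF s0u] by auto
      ultimately have "A' \<inter> {x\<in>space M. (\<forall>j\<in>{..m}. N (et j) x \<le> l) \<and> N u x \<le> l} \<in> sets (F u)" by auto
      moreover have "B' = A' \<inter> {x\<in>space M. (\<forall>j\<in>{..m}. N (et j) x \<le> l) \<and> N u x \<le> l}"
        unfolding B'_def Cm_def by auto
      ultimately show ?thesis by simp
    qed
    have B'M[measurable]: "B' \<in> sets M" using B'F sets_FM by blast
    have PsiB': "Psi B' \<le> 0"
    proof -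
      have i1: "integrable M (\<lambda>x. indicator B' x * Y x)" using Y by (intro int_ind) auto
      have i2: "integrable M (\<lambda>x. indicator B' x * N u x)" using Nint by (intro int_ind) auto
      have "Psi B' = (\<integral>x. indicator B' x * Y x \<partial>M) - l * measure M B'"
        unfolding Psi_def using i1 by (simp add: right_diff_distrib Bochner_Integration.integral_diff)
      also have "(\<integral>x. indicator B' x * Y x \<partial>M) = (\<integral>x. indicator B' x * N u x \<partial>M)"
        unfolding N_def
        by (rule sigma_finite_subalgebra.real_cond_exp_intg(2)[OF sfs, symmetric]) (use Y B'F i1 in auto)
      also have "(\<integral>x. indicator B' x * N u x \<partial>M) \<le> (\<integral>x. indicator B' x * l \<partial>M)"
      proof (rule integral_mono)
        show "integrable M (\<lambda>x. indicator B' x * l)" by simp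
        fix x show "indicator B' x * N u x \<le> indicator B' x * l" by (auto simp: B'_def indicator_def)
      qed (use i2 in auto)
      finally show ?thesis by simp
    qed
    have sub: "(B - B') \<union> (B' - B) \<subseteq> ((B - A') \<union> (A' - B)) \<union> (Cm m - C)"
    proof -
      have "B \<subseteq> {x\<in>space M. N u x \<le> l}" unfolding B_def C_def using ju by auto
      then show ?thesis unfolding B'_def using CCm B_def by auto
    qed
    have "measure M ((B - B') \<union> (B' - B)) \<le> measure M (((B - A') \<union> (A' - B)) \<union> (Cm m - C))"
      by (rule finite_measure_mono[OF sub]) auto
    also have "\<dots> \<le> measure M ((B - A') \<union> (A' - B)) + measure M (Cm m - C)"
      by (rule measure_Un_le) auto
    also have "\<dots> < d" using A'(2) mdiff by simp
    finally have symd: "measure M ((B - B') \<union> (B' - B)) < d" .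
    have "Psi B - Psi B' = (\<integral>x. (indicator B x - indicator B' x) * (Y x - l) \<partial>M)"
      unfolding Psi_def using gi
      by (subst Bochner_Integration.integral_diff[symmetric]) (auto intro!: int_ind simp: left_diff_distrib)
    also have "\<dots> \<le> (\<integral>x. indicator ((B - B') \<union> (B' - B)) x * \<bar>Y x - l\<bar> \<partial>M)"
    proof (rule integral_mono)
      show "integrable M (\<lambda>x. (indicator B x - indicator B' x) * (Y x - l))"
        using gi by (auto intro!: int_ind simp: left_diff_distrib)
      show "integrable M (\<lambda>x. indicator ((B - B') \<union> (B' - B)) x * \<bar>Y x - l\<bar>)"
        using gi by (intro int_ind) auto
      fix x show "(indicator B x - indicator B' x) * (Y x - l) \<le> indicator ((B - B') \<union> (B' - B)) x * \<bar>Y x - l\<bar>"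
        by (auto simp: indicator_def)
    qed
    also have "\<dots> < e" using d(2)[OF _ symd] by auto
    finally show ?thesis using PsiB' by linarith
  qed
  have Psi0: "Psi B \<le> 0"
  proof (rule ccontr)
    assume "\<not> Psi B \<le> 0" then have "Psi B > 0" by simp
    from small[OF this] show False by simp
  qed
  have nn: "AE x in M. 0 \<le> indicator B x * (N t x - l)" by (auto simp: B_def indicator_def)
  have iB: "integrable M (\<lambda>x. indicator B x * (N t x - l))" using Nint by (intro int_ind) auto
  have "(\<integral>x. indicator B x * (N t x - l) \<partial>M) = 0"
    using Psi0 Psi_B integral_nonneg_AE[OF nn] by simp
  then have "AE x in M. indicator B x * (N t x - l) = 0"
    using integral_nonneg_eq_0_iff_AE[OF iB nn] by simp
  then show ?thesis using AE_space
  proof (eventually_elim)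
    case (elim x)
    show ?case
    proof
      assume a: "real_cond_exp M (F t) Y x > l"
      then have "x \<notin> B" using elim(1) unfolding N_def by (auto simp: indicator_def)
      moreover have "x \<in> space M" using elim(2) .
      ultimately have "\<exists>j. N (et j) x > l" using a unfolding B_def C_def N_def by (simp add: not_le)
      then obtain j where "N (et j) x > l" by blast
      then show "\<exists>d\<in>Dq. d < t \<and> real_cond_exp M (F d) Y x > l"
        using etD[of j] unfolding Dt_def N_def by auto
    qed
  qed
qed

lemma doob_dom:
  assumes LC: "\<And>t A e. t > 0 \<Longrightarrow> A \<in> sets (F t) \<Longrightarrow> e > 0 \<Longrightarrow>
          \<exists>s\<in>Dq. s < t \<and> (\<exists>A'\<in>sets (F s). measure M ((A - A') \<union> (A' - A)) < e)"
    and Y: "integrable M Y" "AE x in M. Y x \<ge> 0" and a: "0 < a" "a < 1"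
  shows "\<exists>Z. integrable M Z \<and> (\<forall>t\<ge>0. AE x in M. max (real_cond_exp M (F t) Y x) 0 powr a \<le> Z x)"
proof -
  define N where "N d = real_cond_exp M (F d) Y" for d
  have NM[measurable]: "N d \<in> borel_measurable M" for d unfolding N_def by simp
  define A where "A k = {x\<in>space M. \<exists>d\<in>Dq. N d x > 2 ^ k}" for k :: nat
  have AM[measurable]: "A k \<in> sets M" for k
    unfolding A_def N_def by (rule weak_countable(1)[OF Y]) auto
  have Am: "measure M (A k) \<le> (\<integral>x. Y x \<partial>M) / 2 ^ k" for k
    unfolding A_def N_def by (rule weak_countable(2)[OF Y]) auto
  have decA: "decseq A" unfolding decseq_def A_def
  proof (intro allI impI subsetI)
    fix m n :: nat and x assume "m \<le> n" "x \<in> {x \<in> space M. \<exists>d\<in>Dq. 2 ^ n < N d x}"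
    then obtain d where d: "d \<in> Dq" "2 ^ n < N d x" "x \<in> space M" by auto
    moreover have "(2::real) ^ m \<le> 2 ^ n" using \<open>m \<le> n\<close> by simp
    ultimately have "2 ^ m < N d x" by linarith
    then show "x \<in> {x \<in> space M. \<exists>d\<in>Dq. 2 ^ m < N d x}" using d by auto
  qed
  define c where "c k = 2 powr (a * real (Suc k))" for k :: nat
  have c0: "c k \<ge> 0" for k unfolding c_def by simp
  define f where "f k x = c k * indicator (A k) x" for k x
  have fint: "integrable M (f k)" for k unfolding f_def by simp
  have lim0: "(\<lambda>k. measure M (A k)) \<longlonglongrightarrow> measure M (\<Inter>k. A k)"
    using decA by (intro finite_Lim_measure_decseq) auto
  have "(\<lambda>k::nat. (\<integral>x. Y x \<partial>M) / 2 ^ k) \<longlonglongrightarrow> 0"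
    by (intro tendsto_divide_0[OF tendsto_const]) (simp add: filterlim_realpow_sequentially_gt1)
  then have "measure M (\<Inter>k. A k) \<le> 0"
    using lim0 Am by (intro tendsto_le[OF _ _ lim0]) (auto intro: always_eventually)
  then have null: "(\<Inter>k. A k) \<in> null_sets M"
    by (auto simp: null_sets_def emeasure_eq_measure measure_nonneg intro: antisym)
  have AEs: "AE x in M. summable (\<lambda>k. f k x)"
    using AE_not_in[OF null]
  proof eventually_elim
    case (elim x)
    then obtain k0 where "x \<notin> A k0" by auto
    then have "k \<ge> k0 \<Longrightarrow> x \<notin> A k" for k using decA unfolding decseq_def by auto
    then show ?case unfolding f_def by (intro summable_finite[of "{..<k0}"]) auto
  qed
  define Z where "Z x = 1 + (\<Sum>k. f k x)" for x
  have sumint: "summable (\<lambda>k. \<integral>x. norm (f k x) \<partial>M)"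
  proof (rule summable_comparison_test[where g="\<lambda>k. 2 powr a * (\<integral>x. Y x \<partial>M) * (2 powr (a - 1)) ^ k"])
    have "2 powr (a - 1) < 2 powr 0" using a by (intro powr_less_mono) auto
    then have "norm (2 powr (a - 1) :: real) < 1" by simp
    then show "summable (\<lambda>k. 2 powr a * (\<integral>x. Y x \<partial>M) * (2 powr (a - 1)) ^ k)"
      by (intro summable_mult summable_geometric)
    show "\<exists>N. \<forall>n\<ge>N. norm (\<integral>x. norm (f n x) \<partial>M) \<le> 2 powr a * (\<integral>x. Y x \<partial>M) * (2 powr (a - 1)) ^ n"
    proof (intro exI allI impI)
      fix n :: nat
      have "(\<integral>x. norm (f n x) \<partial>M) = c n * measure M (A n)"
        unfolding f_def using c0 by (simp add: abs_mult)
      also have "\<dots> \<le> c n * ((\<integral>x. Y x \<partial>M) / 2 ^ n)" using Am c0 by (intro mult_left_mono) auto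
      also have "\<dots> = (c n / 2 ^ n) * (\<integral>x. Y x \<partial>M)" by simp
      also have "\<dots> = 2 powr a * (\<integral>x. Y x \<partial>M) * (2 powr (a - 1)) ^ n"
        unfolding c_def geo_aux by simp
      finally show "norm (\<integral>x. norm (f n x) \<partial>M) \<le> 2 powr a * (\<integral>x. Y x \<partial>M) * (2 powr (a - 1)) ^ n"
        by simp
    qed
  qed
  have Zint: "integrable M Z"
  proof -
    have "integrable M (\<lambda>x. \<Sum>k. f k x)"
    proof (rule integrable_suminf)
      show "AE x in M. summable (\<lambda>k. norm (f k x))"
        using AEs by eventually_elim (auto simp: f_def c_def abs_mult)
    qed (use fint sumint in auto)
    then show ?thesis unfolding Z_def by simp
  qed
  have main: "AE x in M. max (N t x) 0 powr a \<le> Z x" if t: "t \<ge> 0" for t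
  proof -
    have AEk: "AE x in M. \<forall>k. N t x > 2 ^ k \<longrightarrow> x \<in> A k"
    proof (cases "t \<in> Dq")
      case True
      show ?thesis
        by (rule AE_I2) (use True in \<open>auto simp: A_def\<close>)
    next
      case False
      then have "t > 0" using t Dq_ne by (cases "t = 0") auto
      have "\<forall>k::nat. AE x in M. N t x > 2 ^ k \<longrightarrow> x \<in> A k"
      proof
        fix k :: nat
        have "AE x in M. N t x > 2 ^ k \<longrightarrow> (\<exists>d\<in>Dq. d < t \<and> N d x > 2 ^ k)" unfolding N_def
          by (rule lc_step[OF _ \<open>t > 0\<close> Y(1)]) (rule LC[OF \<open>t > 0\<close>]; assumption)
        then show "AE x in M. N t x > 2 ^ k \<longrightarrow> x \<in> A k"
          using AE_space by eventually_elim (auto simp: A_def)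
      qed
      then show ?thesis by (simp add: AE_all_countable)
    qed
    show ?thesis using AEk AEs
    proof eventually_elim
      case (elim x)
      have sn: "0 \<le> (\<Sum>k. f k x)" using elim(2) by (intro suminf_nonneg) (auto simp: f_def c0)
      show ?case
      proof (cases "N t x \<le> 1")
        case True
        have "max (N t x) 0 powr a \<le> 1 powr a"
        proof (cases "N t x \<le> 0")
          case False
          then show ?thesis using True a by (auto intro!: powr_le1)
        qed (use a in auto)
        then show ?thesis using sn unfolding Z_def by simp
      next
        case False
        then obtain k where k: "2 ^ k < N t x" "N t x \<le> 2 ^ Suc k" using dyadic by force
        then have "x \<in> A k" using elim(1) by auto
        have "max (N t x) 0 powr a = N t x powr a" using False by simp
        also have "\<dots> \<le> (2 ^ Suc k) powr a" using k False a by (intro powr_mono2) auto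
        also have "(2::real) ^ Suc k = 2 powr real (Suc k)" by (rule powr_realpow[symmetric]) simp
        also have "(2 powr real (Suc k)) powr a = c k" unfolding c_def by (simp add: powr_powr mult.commute)
        also have "c k = f k x" unfolding f_def using \<open>x \<in> A k\<close> by simp
        also have "f k x \<le> (\<Sum>k. f k x)"
        proof -
          have "sum (\<lambda>k. f k x) {k} \<le> (\<Sum>k. f k x)"
            by (rule sum_le_suminf[OF elim(2)]) (auto simp: f_def c0)
          then show ?thesis by simp
        qed
        finally show ?thesis unfolding Z_def by simp
      qed
    qed
  qed
  show ?thesis using Zint main unfolding N_def by blast
qed

end


lemma bmf_gen_pow:
  "{W s -` A \<inter> space M | s A. 0 \<le> s \<and> s \<le> t \<and> A \<in> sets borel} \<union> null_sets M \<subseteq> Pow (space M)"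
  using sets.sets_into_space[of _ M] by (auto simp: null_sets_def)

lemma sets_bmf: "sets (bm_filtration M W t) =
   sigma_sets (space M) ({W s -` A \<inter> space M | s A. 0 \<le> s \<and> s \<le> t \<and> A \<in> sets borel} \<union> null_sets M)"
  unfolding bm_filtration_def by (rule sets_measure_of[OF bmf_gen_pow])

lemma space_bmf: "space (bm_filtration M W t) = space M"
  unfolding bm_filtration_def by (rule space_measure_of[OF bmf_gen_pow])

lemma bmf_gen_in: "0 \<le> s \<Longrightarrow> s \<le> t \<Longrightarrow> A \<in> sets borel \<Longrightarrow> W s -` A \<inter> space M \<in> sets (bm_filtration M W t)"
  unfolding sets_bmf by (rule sigma_sets.Basic) blast

lemma bmf_null_in: "N \<in> null_sets M \<Longrightarrow> N \<in> sets (bm_filtration M W t)"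
  unfolding sets_bmf by (rule sigma_sets.Basic) blast

lemma bmf_mono: "s \<le> t \<Longrightarrow> sets (bm_filtration M W s) \<subseteq> sets (bm_filtration M W t)"
  unfolding sets_bmf
proof (rule sigma_sets_mono')
  assume st: "s \<le> t"
  have "{W sa -` A \<inter> space M |sa A. 0 \<le> sa \<and> sa \<le> s \<and> A \<in> sets borel}
     \<subseteq> {W sa -` A \<inter> space M |sa A. 0 \<le> sa \<and> sa \<le> t \<and> A \<in> sets borel}"
  proof
    fix u assume "u \<in> {W sa -` A \<inter> space M |sa A. 0 \<le> sa \<and> sa \<le> s \<and> A \<in> sets borel}"
    then obtain sa A where "u = W sa -` A \<inter> space M" "0 \<le> sa" "sa \<le> s" "A \<in> sets borel" by blast
    then show "u \<in> {W sa -` A \<inter> space M |sa A. 0 \<le> sa \<and> sa \<le> t \<and> A \<in> sets borel}"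
      using st by (intro CollectI exI[of _ sa] exI[of _ A]) auto
  qed
  then show "{W sa -` A \<inter> space M |sa A. 0 \<le> sa \<and> sa \<le> s \<and> A \<in> sets borel} \<union> null_sets M
     \<subseteq> {W sa -` A \<inter> space M |sa A. 0 \<le> sa \<and> sa \<le> t \<and> A \<in> sets borel} \<union> null_sets M" by blast
qed

lemma bmf_sub:
  assumes bm: "brownian_motion M W"
  shows "subalgebra M (bm_filtration M W t)"
proof -
  have Wm: "0 \<le> s \<Longrightarrow> W s \<in> borel_measurable M" for s using bm unfolding brownian_motion_def by auto
  have "{W s -` A \<inter> space M | s A. 0 \<le> s \<and> s \<le> t \<and> A \<in> sets borel} \<union> null_sets M \<subseteq> sets M"
    using Wm by (auto simp: null_sets_def measurable_sets)
  then have "sets (bm_filtration M W t) \<subseteq> sets M" unfolding sets_bmf by (rule sets.sigma_sets_subset)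
  then show ?thesis unfolding subalgebra_def space_bmf by simp
qed

lemma bmf_bfilt:
  assumes "prob_space M" "brownian_motion M W"
  shows "bfilt M (bm_filtration M W)"
  unfolding bfilt_def bfilt_axioms_def using assms bmf_sub bmf_mono by blast

lemma W_meas_bmf:
  assumes "0 \<le> s" "s \<le> t"
  shows "W s \<in> borel_measurable (bm_filtration M W t)"
  by (rule measurableI) (use assms in \<open>auto simp: space_bmf intro!: bmf_gen_in\<close>)

lemma rat_seq_below:
  assumes t: "(t::real) > 0"
  shows "\<exists>r::nat \<Rightarrow> real. (\<forall>n. r n \<in> Dq \<and> r n < t) \<and> r \<longlonglongrightarrow> t"
proof -
  have "\<forall>n. \<exists>q. q \<in> \<rat> \<and> max 0 (t - inverse (real (Suc n))) < q \<and> q < t"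
  proof
    fix n
    have "max 0 (t - inverse (real (Suc n))) < t" using t by auto
    then show "\<exists>q. q \<in> \<rat> \<and> max 0 (t - inverse (real (Suc n))) < q \<and> q < t"
      using Rats_dense_in_real by blast
  qed
  then obtain r where r: "\<And>n. r n \<in> \<rat>" "\<And>n. max 0 (t - inverse (real (Suc n))) < r n" "\<And>n. r n < t"
    by metis
  have "(\<lambda>n. t - r n) \<longlonglongrightarrow> 0"
  proof (rule real_tendsto_sandwich[where f="\<lambda>n. 0" and h="\<lambda>n. inverse (real (Suc n))"])
    show "\<forall>\<^sub>F n in sequentially. 0 \<le> t - r n" using r(3) by (intro always_eventually) (auto intro: less_imp_le)
    show "\<forall>\<^sub>F n in sequentially. t - r n \<le> inverse (real (Suc n))"
    proof (intro always_eventually allI)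
      fix n
      have "t - inverse (real (Suc n)) < r n" using r(2)[of n] by (simp add: max_less_iff_conj)
      then show "t - r n \<le> inverse (real (Suc n))" by linarith
    qed
    show "(\<lambda>n. inverse (real (Suc n))) \<longlonglongrightarrow> 0" by (rule LIMSEQ_inverse_real_of_nat)
  qed simp
  then have "(\<lambda>n. t - (t - r n)) \<longlonglongrightarrow> t - 0" by (intro tendsto_diff) auto
  then have "r \<longlonglongrightarrow> t" by simp
  moreover have "r n \<in> Dq" for n using r(1) r(2)[of n] unfolding Dq_def by auto
  ultimately show ?thesis using r(3) by blast
qed

lemma bmf_LC:
  assumes prob: "prob_space M" and bm: "brownian_motion M W" and t: "t > 0"
    and A: "A \<in> sets (bm_filtration M W t)" and e: "e > 0"
  shows "\<exists>s\<in>Dq. s < t \<and> (\<exists>A'\<in>sets (bm_filtration M W s). measure M ((A - A') \<union> (A' - A)) < e)"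
proof -
  define F where "F = bm_filtration M W"
  interpret bfilt M F unfolding F_def using bmf_bfilt[OF prob bm] .
  define Cl where "Cl = {A\<in>sets M. \<forall>e>0. \<exists>s\<in>Dq. s < t \<and> (\<exists>A'\<in>sets (F s). measure M ((A - A') \<union> (A' - A)) < e)}"
  have inF: "A \<in> Cl" if "s \<in> Dq" "s < t" "A \<in> sets (F s)" for s A
    using that sets_FM unfolding Cl_def by (auto intro!: bexI[of _ s] bexI[of _ A])
  have sa: "sigma_algebra (space M) Cl"
    unfolding sigma_algebra_iff2
  proof (intro conjI allI ballI impI)
    show "Cl \<subseteq> Pow (space M)" unfolding Cl_def using sets.sets_into_space by auto
    show "{} \<in> Cl" using t Dq_ne by (intro inF[of 0]) auto
  next
    fix A assume "A \<in> Cl"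
    then have AM: "A \<in> sets M" and Ae: "\<And>e. e > 0 \<Longrightarrow> \<exists>s\<in>Dq. s < t \<and> (\<exists>A'\<in>sets (F s). measure M ((A - A') \<union> (A' - A)) < e)"
      unfolding Cl_def by auto
    show "space M - A \<in> Cl" unfolding Cl_def
    proof (intro CollectI conjI allI impI)
      show "space M - A \<in> sets M" using AM by auto
      fix e :: real assume "e > 0"
      then obtain s A' where s: "s \<in> Dq" "s < t" "A' \<in> sets (F s)" "measure M ((A - A') \<union> (A' - A)) < e"
        using Ae by blast
      have A'M: "A' \<subseteq> space M" using sets_FM[OF s(3)] sets.sets_into_space by auto
      have AS: "A \<subseteq> space M" using AM sets.sets_into_space by auto
      have "space M - A' \<in> sets (F s)" using s(3) sets.compl_sets[of A' "F s"] by simp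
      moreover have "((space M - A) - (space M - A')) \<union> ((space M - A') - (space M - A)) = (A - A') \<union> (A' - A)"
        using A'M AS by auto
      ultimately show "\<exists>s\<in>Dq. s < t \<and> (\<exists>A'\<in>sets (F s). measure M (((space M - A) - A') \<union> (A' - (space M - A))) < e)"
        using s by (intro bexI[of _ s] conjI bexI[of _ "space M - A'"]) auto
    qed
  next
    fix As :: "nat \<Rightarrow> 'a set" assume As: "range As \<subseteq> Cl"
    then have AsM: "As i \<in> sets M" for i unfolding Cl_def by auto
    have Ase: "\<And>i e. e > 0 \<Longrightarrow> \<exists>s. s \<in> Dq \<and> s < t \<and> (\<exists>A'. A' \<in> sets (F s) \<and> measure M ((As i - A') \<union> (A' - As i)) < e)"
      using As unfolding Cl_def by blast
    show "(\<Union>i. As i) \<in> Cl" unfolding Cl_def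
    proof (intro CollectI conjI allI impI)
      show UM: "(\<Union>i. As i) \<in> sets M" using AsM by auto
      fix e :: real assume e: "e > 0"
      define U where "U n = (\<Union>i<n. As i)" for n
      have UM': "U n \<in> sets M" for n unfolding U_def using AsM by auto
      have "(\<lambda>n. measure M (U n)) \<longlonglongrightarrow> measure M (\<Union>n. U n)"
      proof (intro finite_Lim_measure_incseq)
        show "incseq U" unfolding incseq_def U_def by (intro allI impI UN_mono) auto
      qed (use UM' in auto)
      moreover have "(\<Union>n. U n) = (\<Union>i. As i)" unfolding U_def by auto
      ultimately have "(\<lambda>n. measure M (U n)) \<longlonglongrightarrow> measure M (\<Union>i. As i)" by simp
      then have "\<forall>\<^sub>F n in sequentially. dist (measure M (U n)) (measure M (\<Union>i. As i)) < e/2"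
        using e by (intro tendstoD) auto
      then obtain N where N: "\<And>n. n \<ge> N \<Longrightarrow> dist (measure M (U n)) (measure M (\<Union>i. As i)) < e/2"
        unfolding eventually_sequentially by blast
      define n where "n = Suc N"
      have n: "n > 0" "dist (measure M (U n)) (measure M (\<Union>i. As i)) < e/2" using N[of n] unfolding n_def by auto
      have "\<forall>i. \<exists>s. s \<in> Dq \<and> s < t \<and> (\<exists>A'. A' \<in> sets (F s) \<and> measure M ((As i - A') \<union> (A' - As i)) < e / (2 * real n))"
      proof
        fix i
        have "e / (2 * real n) > 0" using e n by simp
        then show "\<exists>s. s \<in> Dq \<and> s < t \<and> (\<exists>A'. A' \<in> sets (F s) \<and> measure M ((As i - A') \<union> (A' - As i)) < e / (2 * real n))"
          by (rule Ase)
      qed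
      then have "\<exists>sf. \<forall>i. sf i \<in> Dq \<and> sf i < t \<and> (\<exists>A'. A' \<in> sets (F (sf i)) \<and> measure M ((As i - A') \<union> (A' - As i)) < e / (2 * real n))"
        by (rule choice)
      then obtain sf where sf0: "\<forall>i. sf i \<in> Dq \<and> sf i < t \<and> (\<exists>A'. A' \<in> sets (F (sf i)) \<and> measure M ((As i - A') \<union> (A' - As i)) < e / (2 * real n))"
        by blast
      then have "\<forall>i. \<exists>A'. A' \<in> sets (F (sf i)) \<and> measure M ((As i - A') \<union> (A' - As i)) < e / (2 * real n)"
        by blast
      then have "\<exists>Af. \<forall>i. Af i \<in> sets (F (sf i)) \<and> measure M ((As i - Af i) \<union> (Af i - As i)) < e / (2 * real n)"
        by (rule choice)
      then obtain Af where Af0: "\<forall>i. Af i \<in> sets (F (sf i)) \<and> measure M ((As i - Af i) \<union> (Af i - As i)) < e / (2 * real n)"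
        by blast
      have sf: "\<And>i. sf i \<in> Dq" "\<And>i. sf i < t" "\<And>i. Af i \<in> sets (F (sf i))"
        "\<And>i. measure M ((As i - Af i) \<union> (Af i - As i)) < e / (2 * real n)"
        using sf0 Af0 by auto
      define s where "s = Max (sf ` {..<n})"
      have sne: "sf ` {..<n} \<noteq> {}" "finite (sf ` {..<n})" using n by auto
      have sin: "s \<in> sf ` {..<n}" unfolding s_def using sne by (intro Max_in) auto
      have sD: "s \<in> Dq" "s < t" using sin sf by auto
      have sge: "i < n \<Longrightarrow> sf i \<le> s" for i unfolding s_def using sne by (intro Max_ge) auto
      define A' where "A' = (\<Union>i<n. Af i)"
      have A'F: "A' \<in> sets (F s)" unfolding A'_def
        using sf(3) fmono[OF sge] by (intro sets.finite_UN) auto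
      have AfM: "Af i \<in> sets M" for i using sf(3) sets_FM by blast
      have sub: "((\<Union>i. As i) - A') \<union> (A' - (\<Union>i. As i)) \<subseteq> ((\<Union>i. As i) - U n) \<union> (\<Union>i<n. (As i - Af i) \<union> (Af i - As i))"
      proof
        fix x assume x: "x \<in> ((\<Union>i. As i) - A') \<union> (A' - (\<Union>i. As i))"
        show "x \<in> ((\<Union>i. As i) - U n) \<union> (\<Union>i<n. (As i - Af i) \<union> (Af i - As i))"
        proof (cases "x \<in> U n")
          case False then show ?thesis using x unfolding A'_def U_def by auto
        next
          case True
          then obtain i where i: "i < n" "x \<in> As i" unfolding U_def by auto
          show ?thesis
          proof (cases "x \<in> A'")
            case True
            then obtain j where j: "j < n" "x \<in> Af j" unfolding A'_def by auto
            then have "x \<notin> (\<Union>i. As i)" using x True by auto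
            then show ?thesis using j by auto
          next
            case False
            then have "x \<notin> Af i" using i unfolding A'_def by auto
            then show ?thesis using i by auto
          qed
        qed
      qed
      have m1: "measure M (((\<Union>i. As i) - A') \<union> (A' - (\<Union>i. As i))) \<le> measure M (((\<Union>i. As i) - U n) \<union> (\<Union>i<n. (As i - Af i) \<union> (Af i - As i)))"
        by (rule finite_measure_mono[OF sub]) (use UM UM' AsM AfM in auto)
      have m2: "measure M (((\<Union>i. As i) - U n) \<union> (\<Union>i<n. (As i - Af i) \<union> (Af i - As i))) \<le> measure M ((\<Union>i. As i) - U n) + measure M (\<Union>i<n. (As i - Af i) \<union> (Af i - As i))"
        by (rule measure_Un_le) (use UM UM' AsM AfM in auto)
      have m3: "measure M ((\<Union>i. As i) - U n) = measure M (\<Union>i. As i) - measure M (U n)"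
        by (rule finite_measure_Diff) (use UM UM' in \<open>auto simp: U_def\<close>)
      have m4: "measure M (\<Union>i<n. (As i - Af i) \<union> (Af i - As i)) \<le> (\<Sum>i<n. measure M ((As i - Af i) \<union> (Af i - As i)))"
        by (rule measure_UNION_le) (use AsM AfM in auto)
      have m5: "(\<Sum>i<n. measure M ((As i - Af i) \<union> (Af i - As i))) < (\<Sum>i<n. e / (2 * real n))"
        using n(1) sf(4) by (intro sum_strict_mono) auto
      have m6: "(\<Sum>i<n. e / (2 * real n)) = e / 2" using n(1) by simp
      have m7: "measure M (\<Union>i. As i) - measure M (U n) < e/2"
        using n(2) unfolding dist_real_def abs_less_iff by linarith
      have "measure M (((\<Union>i. As i) - A') \<union> (A' - (\<Union>i. As i))) < e"
        using m1 m2 m3 m4 m5 m6 m7 by linarith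
      then show "\<exists>s\<in>Dq. s < t \<and> (\<exists>A'\<in>sets (F s). measure M (((\<Union>i. As i) - A') \<union> (A' - (\<Union>i. As i))) < e)"
        using sD A'F by blast
    qed
  qed
  have gens: "{W s -` B \<inter> space M | s B. 0 \<le> s \<and> s \<le> t \<and> B \<in> sets borel} \<union> null_sets M \<subseteq> Cl"
  proof
    fix u assume "u \<in> {W s -` B \<inter> space M | s B. 0 \<le> s \<and> s \<le> t \<and> B \<in> sets borel} \<union> null_sets M"
    then consider (nul) "u \<in> null_sets M" | (gen) s B where "u = W s -` B \<inter> space M" "0 \<le> s" "s \<le> t" "B \<in> sets borel"
      by blast
    then show "u \<in> Cl"
    proof cases
      case nul
      then show ?thesis using t Dq_ne by (intro inF[of 0]) (auto simp: F_def intro: bmf_null_in)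
    next
      case gen
      show ?thesis
      proof (cases "s < t")
        case True
        then obtain q where q: "q \<in> \<rat>" "s < q" "q < t" using Rats_dense_in_real by blast
        then have "q \<in> Dq" using gen unfolding Dq_def by auto
        then show ?thesis using gen q by (intro inF[of q]) (auto simp: F_def intro: bmf_gen_in)
      next
        case False
        then have st: "s = t" using gen by auto
        define Mc where "Mc = measure_of (space M) Cl (\<lambda>_. 0)"
        have sMc: "sets Mc = Cl" unfolding Mc_def using sigma_algebra.sets_measure_of_eq[OF sa] by blast
        have spMc: "space Mc = space M" unfolding Mc_def using sigma_algebra.space_measure_of_eq[OF sa] by blast
        obtain r where r: "\<And>n. r n \<in> Dq" "\<And>n. r n < t" "r \<longlonglongrightarrow> t" using rat_seq_below[OF t] by blast
        have r0: "r n \<ge> 0" for n using r(1) unfolding Dq_def by auto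
        have Wr: "W (r n) \<in> borel_measurable Mc" for n
        proof (rule measurableI)
          fix B :: "(real ^ 'b) set" assume "B \<in> sets borel"
          then have "W (r n) -` B \<inter> space M \<in> Cl"
            using r r0 by (intro inF[of "r n"]) (auto simp: F_def intro: bmf_gen_in)
          then show "W (r n) -` B \<inter> space Mc \<in> sets Mc" using sMc spMc by simp
        qed auto
        have cont: "continuous_on {0..} (\<lambda>t. W t x)" if "x \<in> space M" for x
          using bm that unfolding brownian_motion_def by auto
        have "W t \<in> borel_measurable Mc"
        proof (rule borel_measurable_LIMSEQ_metric[OF Wr])
          fix x assume "x \<in> space Mc"
          then have "x \<in> space M" using spMc by simp
          then show "(\<lambda>n. W (r n) x) \<longlonglongrightarrow> W t x"
            using continuous_on_tendsto_compose[OF cont r(3), of x] t r0 by (auto intro: always_eventually)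
        qed
        then have "W t -` B \<inter> space Mc \<in> sets Mc" using gen measurable_sets by blast
        then show ?thesis using gen st sMc spMc by simp
      qed
    qed
  qed
  have "sets (F t) \<subseteq> Cl" unfolding F_def sets_bmf using sigma_algebra.sigma_sets_subset[OF sa gens] .
  then have AC: "A \<in> Cl" using A unfolding F_def by (rule subsetD)
  then have "\<exists>s\<in>Dq. s < t \<and> (\<exists>A'\<in>sets (F s). measure M ((A - A') \<union> (A' - A)) < e)"
    using e unfolding Cl_def by simp
  then show ?thesis unfolding F_def .
qed



lemma grid_iff: "t \<in> grid h \<longleftrightarrow> (\<exists>n::nat. t = real n * h)"
  by (auto simp: grid_def)

lemma grid_add: "t \<in> grid h \<Longrightarrow> t + real k * h \<in> grid h"
proof -
  assume "t \<in> grid h"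
  then obtain n where "t = real n * h" unfolding grid_iff by blast
  then have "t + real k * h = real (n + k) * h" by (simp add: algebra_simps)
  then show ?thesis unfolding grid_iff by blast
qed

lemma (in prob_space) sq_int_imp_int:
  fixes f :: "'a \<Rightarrow> real"
  assumes [measurable]: "f \<in> borel_measurable M" and i: "integrable M (\<lambda>x. (f x)\<^sup>2)"
  shows "integrable M f"
proof (rule Bochner_Integration.integrable_bound[where f="\<lambda>x. 1 + (f x)\<^sup>2"])
  show "integrable M (\<lambda>x. 1 + (f x)\<^sup>2)" using i by simp
  show "AE x in M. norm (f x) \<le> norm (1 + (f x)\<^sup>2)"
  proof (rule AE_I2)
    fix x
    have "\<bar>f x\<bar> \<le> 1 + (f x)\<^sup>2"
    proof (cases "\<bar>f x\<bar> \<le> 1")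
      case True then show ?thesis by (simp add: add_increasing2)
    next
      case False then have "\<bar>f x\<bar> * 1 \<le> \<bar>f x\<bar> * \<bar>f x\<bar>" by (intro mult_left_mono) auto
      moreover have "\<bar>f x\<bar> * \<bar>f x\<bar> = (f x)\<^sup>2" by (simp add: power2_eq_square)
      ultimately show ?thesis by (smt (verit) zero_le_power2)
    qed
    then show "norm (f x) \<le> norm (1 + (f x)\<^sup>2)" by simp
  qed
qed simp

lemma (in prob_space) L1_le_L2:
  fixes f :: "'a \<Rightarrow> real"
  assumes [measurable]: "f \<in> borel_measurable M" and i: "integrable M (\<lambda>x. (f x)\<^sup>2)"
  shows "(\<integral>x. \<bar>f x\<bar> \<partial>M) \<le> sqrt (\<integral>x. (f x)\<^sup>2 \<partial>M)"
proof -
  have fi: "integrable M f" by (rule sq_int_imp_int) (use i in auto)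
  define mu where "mu = (\<integral>x. \<bar>f x\<bar> \<partial>M)"
  have mu0: "mu \<ge> 0" unfolding mu_def by simp
  have "0 \<le> (\<integral>x. (\<bar>f x\<bar> - mu)\<^sup>2 \<partial>M)" by simp
  also have "(\<integral>x. (\<bar>f x\<bar> - mu)\<^sup>2 \<partial>M) = (\<integral>x. (f x)\<^sup>2 - 2 * mu * \<bar>f x\<bar> + mu\<^sup>2 \<partial>M)"
    by (simp add: power2_eq_square algebra_simps abs_mult_self_eq)
  also have "\<dots> = (\<integral>x. (f x)\<^sup>2 \<partial>M) - 2 * mu * mu + mu\<^sup>2"
    using i fi by (simp add: mu_def prob_space)
  finally have "mu\<^sup>2 \<le> (\<integral>x. (f x)\<^sup>2 \<partial>M)" by (simp add: power2_eq_square)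
  then show ?thesis unfolding mu_def[symmetric] by (rule real_le_rsqrt)
qed

lemma c_exp_bound:
  fixes a :: real
  assumes "0 \<le> a" "a \<le> 1/12"
  shows "1 / (1 - a) \<le> exp (7/6 * a)"
proof -
  have "- a - 2 * a\<^sup>2 \<le> ln (1 - a)" using assms by (intro ln_one_minus_pos_lower_bound) auto
  moreover have "2 * a\<^sup>2 \<le> a / 6"
  proof -
    have "a * a \<le> (1/12) * a" using assms by (intro mult_right_mono) auto
    then show ?thesis by (simp add: power2_eq_square)
  qed
  ultimately have "- (7/6 * a) \<le> ln (1 - a)" by linarith
  then have "exp (- (7/6 * a)) \<le> 1 - a" using assms by (subst (asm) ln_ge_iff) auto
  then have "1 / (1 - a) \<le> 1 / exp (- (7/6 * a))" using assms by (intro divide_left_mono) auto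
  then show ?thesis by (simp add: exp_minus field_simps)
qed

context bfilt
begin

lemma ce_abs_le:
  assumes Yi: "integrable M Y"
  shows "AE x in M. \<bar>real_cond_exp M (F s) Y x\<bar> \<le> real_cond_exp M (F s) (\<lambda>x. \<bar>Y x\<bar>) x"
proof -
  interpret S: sigma_finite_subalgebra M "F s" by (rule sfs)
  have Ym[measurable]: "Y \<in> borel_measurable M" using Yi by auto
  have 1: "AE x in M. real_cond_exp M (F s) Y x \<le> real_cond_exp M (F s) (\<lambda>x. \<bar>Y x\<bar>) x"
    by (rule S.real_cond_exp_mono) (use Yi in auto)
  have 2: "AE x in M. real_cond_exp M (F s) (\<lambda>x. (-1) * Y x) x \<le> real_cond_exp M (F s) (\<lambda>x. \<bar>Y x\<bar>) x"
    by (rule S.real_cond_exp_mono) (use Yi in auto)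
  have 3: "AE x in M. real_cond_exp M (F s) (\<lambda>x. (-1) * Y x) x = (-1) * real_cond_exp M (F s) Y x"
    by (rule S.real_cond_exp_cmult) (use Yi in auto)
  show ?thesis using 1 2 3 by eventually_elim auto
qed

lemma disc_bound:
  fixes Ys :: "real \<Rightarrow> 'a \<Rightarrow> real" and tau :: "'a \<Rightarrow> real" and xi :: "'a \<Rightarrow> real"
    and f :: "real \<Rightarrow> 'a \<Rightarrow> real \<Rightarrow> real" and Bf Bx G :: "'a \<Rightarrow> real"
  assumes h: "0 < h" and Lf: "0 < Lf" and ah: "Lf * h \<le> 1/12"
    and taum[measurable]: "tau \<in> borel_measurable M"
    and tgrid: "\<forall>\<omega>\<in>space M. tau \<omega> \<in> grid h"
    and lip: "\<forall>t\<in>grid h. \<forall>\<omega> x y. \<bar>f t \<omega> x - f t \<omega> y\<bar> \<le> Lf * \<bar>x - y\<bar>"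
    and fmeas: "\<forall>t\<in>grid h. (\<lambda>\<omega>. f t \<omega> 0) \<in> borel_measurable M"
    and fixp: "disc_fixpoint M F Lf h tau xi f Ys"
    and Bf: "integrable M Bf" "\<forall>\<omega>. Bf \<omega> \<ge> 0" "\<forall>t\<in>grid h. AE \<omega> in M. t < tau \<omega> \<longrightarrow> \<bar>f t \<omega> 0\<bar> \<le> Bf \<omega>"
    and Bx: "\<forall>\<omega>. Bx \<omega> \<ge> 0" "AE \<omega> in M. \<bar>xi \<omega>\<bar> \<le> Bx \<omega>"
    and G: "integrable M G" "AE \<omega> in M. exp (7/6 * Lf * tau \<omega>) * (tau \<omega> * Bf \<omega> + Bx \<omega>) \<le> G \<omega>"
    and t: "t \<in> grid h"
  shows "AE \<omega> in M. \<bar>Ys t \<omega>\<bar> \<le> real_cond_exp M (F t) G \<omega>"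
proof -
  obtain m :: nat where tm: "t = real m * h" using t unfolding grid_iff by blast
  define a0 where "a0 = Lf * h"
  have a0: "0 < a0" "a0 \<le> 1/12" using h Lf ah unfolding a0_def by auto
  define c where "c = 1 / (1 - a0)"
  have c1: "c \<ge> 1" using a0 unfolding c_def by simp
  define u where "u k = t + real k * h" for k :: nat
  have ug: "u k \<in> grid h" for k unfolding u_def by (rule grid_add[OF t])
  have u_suc: "u k + h = u (Suc k)" for k unfolding u_def by (simp add: algebra_simps)
  have u0: "u 0 = t" unfolding u_def by simp
  have u_le: "t \<le> u k" for k unfolding u_def using h by simp
  have u_eq: "u k = real (m + k) * h" for k unfolding u_def tm by (simp add: algebra_simps)
  have fm: "\<And>s. s \<in> grid h \<Longrightarrow> Ys s \<in> borel_measurable (F s)"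
    and fsq: "\<And>s. s \<in> grid h \<Longrightarrow> integrable M (\<lambda>\<omega>. (Ys s \<omega>)\<^sup>2)"
    and f0: "\<And>s. s \<in> grid h \<Longrightarrow> AE \<omega> in M. s > tau \<omega> \<longrightarrow> Ys s \<omega> = 0"
    and fsum: "summable (\<lambda>n::nat. (1 - 3 * Lf * h) powr (- real n) *
        sqrt (\<integral>\<omega>. (indicator {\<omega>. real n * h \<le> tau \<omega>} \<omega> * Ys (real n * h) \<omega>)\<^sup>2 \<partial>M))"
    and feq: "\<And>s. s \<in> grid h \<Longrightarrow> AE \<omega> in M. Ys s \<omega> =
        indicator {\<omega>. s < tau \<omega>} \<omega> * real_cond_exp M (F s) (Ys (s + h)) \<omega>
        + indicator {\<omega>. s < tau \<omega>} \<omega> * h * f s \<omega> (Ys s \<omega>)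
        + indicator {\<omega>. s = tau \<omega>} \<omega> * xi \<omega>"
    using fixp unfolding disc_fixpoint_def by auto
  have Ysm[measurable]: "Ys (u k) \<in> borel_measurable M" for k using fm[OF ug] by (rule meas_M)
  have Ysi: "integrable M (Ys (u k))" for k by (rule sq_int_imp_int) (use fsq[OF ug] in auto)
  define z where "z k \<omega> = \<bar>Ys (u k) \<omega>\<bar>" for k \<omega>
  have zm[measurable]: "z k \<in> borel_measurable M" for k unfolding z_def by measurable
  have zi: "integrable M (z k)" for k unfolding z_def using Ysi by auto
  define E where "E k = real_cond_exp M (F (u k))" for k
  have Ei: "integrable M (E k g)" if "integrable M g" for k g
    unfolding E_def by (rule sigma_finite_subalgebra.real_cond_exp_int(1)[OF sfs that])
  have fm0[measurable]: "(\<lambda>\<omega>. f (u k) \<omega> 0) \<in> borel_measurable M" for k using fmeas ug by auto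
  define a where "a k \<omega> = (if u k < tau \<omega> then c * h * \<bar>f (u k) \<omega> 0\<bar> else 0) + (if u k = tau \<omega> then z k \<omega> else 0)" for k \<omega>
  have am[measurable]: "a k \<in> borel_measurable M" for k unfolding a_def by measurable
  have a_nn: "a k \<omega> \<ge> 0" for k \<omega> unfolding a_def z_def using c1 h by auto
  have ai: "integrable M (a k)" for k
  proof (rule Bochner_Integration.integrable_bound[where f="\<lambda>\<omega>. c * h * Bf \<omega> + z k \<omega>"])
    show "integrable M (\<lambda>\<omega>. c * h * Bf \<omega> + z k \<omega>)" using Bf(1) zi by auto
    show "AE \<omega> in M. norm (a k \<omega>) \<le> norm (c * h * Bf \<omega> + z k \<omega>)"
      using Bf(3)[rule_format, OF ug[of k]]
    proof eventually_elim
      case (elim \<omega>)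
      have "a k \<omega> \<le> c * h * Bf \<omega> + z k \<omega>"
      proof (cases "u k < tau \<omega>")
        case True
        have "c * h * \<bar>f (u k) \<omega> 0\<bar> \<le> c * h * Bf \<omega>"
          using elim True c1 h by (intro mult_left_mono) auto
        moreover have "z k \<omega> \<ge> 0" by (simp add: z_def)
        ultimately show ?thesis unfolding a_def using True by auto
      next
        case False
        have "c * h * Bf \<omega> \<ge> 0" using Bf(2) c1 h by simp
        then show ?thesis unfolding a_def using False by (auto simp: z_def)
      qed
      then show ?case using a_nn[of k \<omega>] Bf(2) c1 h by (simp add: z_def)
    qed
  qed simp
  have s1: "AE \<omega> in M. z k \<omega> \<le> c * E k (z (Suc k)) \<omega> + a k \<omega>" for k
  proof -
    have e1: "AE \<omega> in M. \<bar>E k (Ys (u (Suc k))) \<omega>\<bar> \<le> E k (z (Suc k)) \<omega>"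
      unfolding E_def z_def by (rule ce_abs_le[OF Ysi])
    have e2: "AE \<omega> in M. E k (z (Suc k)) \<omega> \<ge> 0"
      unfolding E_def by (rule sigma_finite_subalgebra.real_cond_exp_pos[OF sfs]) (auto simp: z_def)
    show ?thesis using feq[OF ug[of k]] f0[OF ug[of k]] e1 e2
    proof eventually_elim
      case (elim \<omega>)
      show ?case
      proof (cases "u k < tau \<omega>")
        case True
        have eq: "Ys (u k) \<omega> = E k (Ys (u (Suc k))) \<omega> + h * f (u k) \<omega> (Ys (u k) \<omega>)"
          using elim(1) True unfolding E_def u_suc by (simp add: indicator_def)
        have lp: "\<bar>f (u k) \<omega> (Ys (u k) \<omega>) - f (u k) \<omega> 0\<bar> \<le> Lf * \<bar>Ys (u k) \<omega> - 0\<bar>"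
          using lip ug by blast
        have "z k \<omega> \<le> \<bar>E k (Ys (u (Suc k))) \<omega>\<bar> + h * \<bar>f (u k) \<omega> (Ys (u k) \<omega>)\<bar>"
        proof -
          have "\<bar>E k (Ys (u (Suc k))) \<omega> + h * f (u k) \<omega> (Ys (u k) \<omega>)\<bar> \<le> \<bar>E k (Ys (u (Suc k))) \<omega>\<bar> + \<bar>h * f (u k) \<omega> (Ys (u k) \<omega>)\<bar>"
            by (rule abs_triangle_ineq)
          then show ?thesis unfolding z_def using h by (subst eq) (simp add: abs_mult)
        qed
        also have "\<dots> \<le> E k (z (Suc k)) \<omega> + h * (\<bar>f (u k) \<omega> 0\<bar> + Lf * z k \<omega>)"
          using elim(3) lp h unfolding z_def by (intro add_mono mult_left_mono) auto
        finally have "(1 - a0) * z k \<omega> \<le> E k (z (Suc k)) \<omega> + h * \<bar>f (u k) \<omega> 0\<bar>"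
          unfolding a0_def by (simp add: algebra_simps)
        then have "c * ((1 - a0) * z k \<omega>) \<le> c * (E k (z (Suc k)) \<omega> + h * \<bar>f (u k) \<omega> 0\<bar>)"
          using c1 by (intro mult_left_mono) auto
        moreover have "c * ((1 - a0) * z k \<omega>) = z k \<omega>" using a0 unfolding c_def by simp
        moreover have "a k \<omega> = c * h * \<bar>f (u k) \<omega> 0\<bar>" using True unfolding a_def by simp
        ultimately show ?thesis by (simp add: algebra_simps)
      next
        case False
        show ?thesis
        proof (cases "u k = tau \<omega>")
          case True
          then have "a k \<omega> = z k \<omega>" unfolding a_def by simp
          then show ?thesis using elim(4) c1 by (simp add: add_increasing)
        next
          case False
          then have "z k \<omega> = 0" using elim(2) \<open>\<not> u k < tau \<omega>\<close> unfolding z_def by auto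
          then show ?thesis using elim(4) c1 a_nn[of k \<omega>] by (simp add: add_nonneg_nonneg)
        qed
      qed
    qed
  qed
  have s2: "AE \<omega> in M. z 0 \<omega> \<le> (\<Sum>k<K. c ^ k * E 0 (a k) \<omega>) + c ^ K * E 0 (z K) \<omega>" for K
  proof (induction K)
    case 0
    have "z 0 \<in> borel_measurable (F (u 0))" unfolding z_def using fm[OF ug[of 0]] by measurable
    then have "AE \<omega> in M. E 0 (z 0) \<omega> = z 0 \<omega>"
      unfolding E_def by (intro sigma_finite_subalgebra.real_cond_exp_F_meas[OF sfs] zi)
    then show ?case by eventually_elim simp
  next
    case (Suc K)
    interpret S0: sigma_finite_subalgebra M "F (u 0)" by (rule sfs)
    have i1: "integrable M (\<lambda>\<omega>. c * E K (z (Suc K)) \<omega>)" using Ei[OF zi] by auto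
    have q1: "AE \<omega> in M. E 0 (z K) \<omega> \<le> E 0 (\<lambda>\<omega>. c * E K (z (Suc K)) \<omega> + a K \<omega>) \<omega>"
      unfolding E_def by (rule S0.real_cond_exp_mono[OF s1[of K, unfolded E_def]]) (use zi ai i1 in \<open>auto simp: E_def\<close>)
    have q2: "AE \<omega> in M. E 0 (\<lambda>\<omega>. c * E K (z (Suc K)) \<omega> + a K \<omega>) \<omega> = E 0 (\<lambda>\<omega>. c * E K (z (Suc K)) \<omega>) \<omega> + E 0 (a K) \<omega>"
      unfolding E_def by (rule S0.real_cond_exp_add) (use ai i1 in \<open>auto simp: E_def\<close>)
    have q3: "AE \<omega> in M. E 0 (\<lambda>\<omega>. c * E K (z (Suc K)) \<omega>) \<omega> = c * E 0 (E K (z (Suc K))) \<omega>"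
      unfolding E_def by (rule S0.real_cond_exp_cmult) (use Ei[OF zi] in \<open>auto simp: E_def\<close>)
    have q4: "AE \<omega> in M. E 0 (E K (z (Suc K))) \<omega> = E 0 (z (Suc K)) \<omega>"
      unfolding E_def
      by (rule S0.real_cond_exp_nested_subalg[OF sub subFF[OF u_le[of K, folded u0]] zi])
    show ?case using Suc.IH q1 q2 q3 q4
    proof eventually_elim
      case (elim \<omega>)
      have "z 0 \<omega> \<le> (\<Sum>k<K. c ^ k * E 0 (a k) \<omega>) + c ^ K * E 0 (z K) \<omega>" using elim(1) .
      also have "c ^ K * E 0 (z K) \<omega> \<le> c ^ K * (c * E 0 (z (Suc K)) \<omega> + E 0 (a K) \<omega>)"
        using elim(2-5) c1 by (intro mult_left_mono) auto
      finally show ?case by (simp add: algebra_simps)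
    qed
  qed
  have s3: "AE \<omega> in M. \<forall>K. (\<Sum>k<K. c ^ k * a k \<omega>) \<le> G \<omega>"
  proof -
    have A1: "AE \<omega> in M. \<forall>k. u k < tau \<omega> \<longrightarrow> \<bar>f (u k) \<omega> 0\<bar> \<le> Bf \<omega>"
      unfolding AE_all_countable using Bf(3) ug by blast
    have A2: "AE \<omega> in M. \<forall>k. u k = tau \<omega> \<longrightarrow> Ys (u k) \<omega> = xi \<omega>"
      unfolding AE_all_countable
    proof
      fix k
      show "AE \<omega> in M. u k = tau \<omega> \<longrightarrow> Ys (u k) \<omega> = xi \<omega>"
        using feq[OF ug[of k]] by eventually_elim (auto simp: indicator_def)
    qed
    show ?thesis using A1 A2 Bx(2) G(2) AE_space
    proof eventually_elim
      case (elim \<omega>)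
      obtain n :: nat where tn: "tau \<omega> = real n * h" using tgrid elim(5) unfolding grid_iff by blast
      have lt: "u k < tau \<omega> \<longleftrightarrow> m + k < n" for k unfolding u_eq tn
        by (metis h mult_less_cancel_right_pos of_nat_less_iff)
      have eqq: "u k = tau \<omega> \<longleftrightarrow> m + k = n" for k unfolding u_eq tn
        using h by (metis mult_cancel_right of_nat_eq_iff less_irrefl)
      have c0: "c \<ge> 0" using c1 by simp
      have cn: "c ^ n \<le> exp (7/6 * Lf * tau \<omega>)"
      proof -
        have "c \<le> exp (7/6 * a0)" unfolding c_def using a0 by (intro c_exp_bound) auto
        then have "c ^ n \<le> exp (7/6 * a0) ^ n" using c0 by (intro power_mono) auto
        also have "\<dots> = exp (real n * (7/6 * a0))" by (rule exp_of_nat_mult[symmetric])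
        also have "real n * (7/6 * a0) = 7/6 * Lf * tau \<omega>" unfolding tn a0_def by simp
        finally show ?thesis .
      qed
      have Bf0: "Bf \<omega> \<ge> 0" "Bx \<omega> \<ge> 0" using Bf(2) Bx(1) by auto
      have trm: "c ^ k * a k \<omega> \<le> (if k < n then c ^ n * h * Bf \<omega> else 0) + (if k = n - m \<and> m \<le> n then c ^ n * Bx \<omega> else 0)" for k
      proof (cases "m + k < n")
        case True
        then have ak: "a k \<omega> = c * h * \<bar>f (u k) \<omega> 0\<bar>" unfolding a_def using lt[of k] eqq[of k] by auto
        have fB: "\<bar>f (u k) \<omega> 0\<bar> \<le> Bf \<omega>" using elim(1) lt[of k] True by auto
        have "c ^ Suc k \<le> c ^ n" using c1 True by (intro power_increasing) auto
        then have "c ^ k * a k \<omega> = c ^ Suc k * h * \<bar>f (u k) \<omega> 0\<bar>" unfolding ak by simp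
        also have "\<dots> \<le> c ^ n * h * Bf \<omega>"
          using \<open>c ^ Suc k \<le> c ^ n\<close> fB h c0 by (intro mult_mono) (auto intro: mult_nonneg_nonneg)
        finally show ?thesis using True Bf0 c0 by auto
      next
        case False
        show ?thesis
        proof (cases "m + k = n")
          case True
          then have ak: "a k \<omega> = z k \<omega>" unfolding a_def using lt[of k] eqq[of k] by auto
          have "z k \<omega> = \<bar>xi \<omega>\<bar>" using elim(2) eqq[of k] True unfolding z_def by auto
          then have zB: "z k \<omega> \<le> Bx \<omega>" using elim(3) by simp
          have "c ^ k \<le> c ^ n" using c1 True by (intro power_increasing) auto
          then have "c ^ k * a k \<omega> \<le> c ^ n * Bx \<omega>" unfolding ak using zB c0 by (intro mult_mono) (auto simp: z_def)
          moreover have "c ^ n * h * Bf \<omega> \<ge> 0" using Bf0 c0 h by simp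
          ultimately show ?thesis using True by auto
        next
          case False
          then have "a k \<omega> = 0" unfolding a_def using lt[of k] eqq[of k] \<open>\<not> m + k < n\<close> by auto
          then show ?thesis using Bf0 c0 h by auto
        qed
      qed
      have sum1: "(\<Sum>k<K. if k < n then X else 0) \<le> real n * X" if X: "X \<ge> 0" for K and X :: real
      proof -
        have "(\<Sum>k<K. if k < n then X else 0) = (\<Sum>k\<in>{k\<in>{..<K}. k < n}. X)"
          by (rule sum.inter_filter[symmetric]) auto
        also have "\<dots> = real (card {k\<in>{..<K}. k < n}) * X" by simp
        also have "card {k\<in>{..<K}. k < n} \<le> card {..<n}" by (intro card_mono) auto
        then have "real (card {k\<in>{..<K}. k < n}) * X \<le> real n * X" using X by (intro mult_right_mono) auto
        finally show ?thesis .
      qed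
      have sum2: "(\<Sum>k<K. if k = n - m \<and> m \<le> n then Y else 0) \<le> Y" if Y: "Y \<ge> 0" for K and Y :: real
      proof -
        have "(\<Sum>k<K. if k = n - m \<and> m \<le> n then Y else 0) = (\<Sum>k<K. if k = n - m then (if m \<le> n then Y else 0) else 0)"
          by (intro sum.cong) auto
        also have "\<dots> = (if n - m \<in> {..<K} then (if m \<le> n then Y else 0) else 0)" by (rule sum.delta) simp
        finally show ?thesis using Y by auto
      qed
      show ?case
      proof
        fix K
        have "(\<Sum>k<K. c ^ k * a k \<omega>) \<le> (\<Sum>k<K. (if k < n then c ^ n * h * Bf \<omega> else 0) + (if k = n - m \<and> m \<le> n then c ^ n * Bx \<omega> else 0))"
          by (intro sum_mono trm)
        also have "\<dots> = (\<Sum>k<K. if k < n then c ^ n * h * Bf \<omega> else 0) + (\<Sum>k<K. if k = n - m \<and> m \<le> n then c ^ n * Bx \<omega> else 0)"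
          by (rule sum.distrib)
        also have "\<dots> \<le> real n * (c ^ n * h * Bf \<omega>) + c ^ n * Bx \<omega>"
          using Bf0 c0 h by (intro add_mono sum1 sum2) auto
        also have "\<dots> = c ^ n * (tau \<omega> * Bf \<omega> + Bx \<omega>)" unfolding tn by (simp add: algebra_simps)
        also have "\<dots> \<le> exp (7/6 * Lf * tau \<omega>) * (tau \<omega> * Bf \<omega> + Bx \<omega>)"
          using cn Bf0 h unfolding tn by (intro mult_right_mono) auto
        also have "\<dots> \<le> G \<omega>" using elim(4) .
        finally show "(\<Sum>k<K. c ^ k * a k \<omega>) \<le> G \<omega>" .
      qed
    qed
  qed
  have s4: "(\<lambda>K. c ^ K * (\<integral>\<omega>. z K \<omega> \<partial>M)) \<longlonglongrightarrow> 0"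
  proof -
    define T where "T n = (1 - 3 * Lf * h) powr (- real n) *
        sqrt (\<integral>\<omega>. (indicator {\<omega>. real n * h \<le> tau \<omega>} \<omega> * Ys (real n * h) \<omega>)\<^sup>2 \<partial>M)" for n :: nat
    have "T \<longlonglongrightarrow> 0" using summable_LIMSEQ_zero[OF fsum] unfolding T_def .
    then have TK: "(\<lambda>K. T (K + m)) \<longlonglongrightarrow> 0" by (rule LIMSEQ_ignore_initial_segment)
    define q where "q = 1 - 3 * a0"
    have q: "q > 0" "q \<le> 1 - a0" using a0 unfolding q_def by auto
    have cq: "c \<le> 1 / q" unfolding c_def using q by (intro divide_left_mono) auto
    have q1: "1 / q \<ge> 1" using q a0 by simp
    have b: "0 \<le> c ^ K * (\<integral>\<omega>. z K \<omega> \<partial>M) \<and> c ^ K * (\<integral>\<omega>. z K \<omega> \<partial>M) \<le> T (K + m)" for K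
    proof
      show "0 \<le> c ^ K * (\<integral>\<omega>. z K \<omega> \<partial>M)" using c1 by (simp add: z_def)
      define V where "V \<omega> = (if u K \<le> tau \<omega> then Ys (u K) \<omega> else 0)" for \<omega>
      have Vm[measurable]: "V \<in> borel_measurable M" unfolding V_def by measurable
      have Vsq: "integrable M (\<lambda>\<omega>. (V \<omega>)\<^sup>2)"
        by (rule Bochner_Integration.integrable_bound[OF fsq[OF ug[of K]]]) (auto simp: V_def)
      have zV: "(\<integral>\<omega>. z K \<omega> \<partial>M) = (\<integral>\<omega>. \<bar>V \<omega>\<bar> \<partial>M)"
      proof (rule integral_cong_AE)
        show "AE \<omega> in M. z K \<omega> = \<bar>V \<omega>\<bar>"
          using f0[OF ug[of K]] by eventually_elim (auto simp: z_def V_def)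
      qed auto
      also have "\<dots> \<le> sqrt (\<integral>\<omega>. (V \<omega>)\<^sup>2 \<partial>M)" by (rule L1_le_L2[OF Vm Vsq])
      also have "(\<integral>\<omega>. (V \<omega>)\<^sup>2 \<partial>M) = (\<integral>\<omega>. (indicator {\<omega>. real (K + m) * h \<le> tau \<omega>} \<omega> * Ys (real (K + m) * h) \<omega>)\<^sup>2 \<partial>M)"
        unfolding V_def u_eq by (intro Bochner_Integration.integral_cong) (auto simp: indicator_def add.commute)
      finally have zle: "(\<integral>\<omega>. z K \<omega> \<partial>M) \<le> sqrt (\<integral>\<omega>. (indicator {\<omega>. real (K + m) * h \<le> tau \<omega>} \<omega> * Ys (real (K + m) * h) \<omega>)\<^sup>2 \<partial>M)" .
      have "c ^ K \<le> (1 / q) ^ K" using cq c1 by (intro power_mono) auto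
      also have "\<dots> \<le> (1 / q) ^ (K + m)" using q1 by (intro power_increasing) auto
      also have "(1 / q) ^ (K + m) = (1 - 3 * Lf * h) powr (- real (K + m))"
      proof -
        have qe: "q = 1 - 3 * Lf * h" unfolding q_def a0_def by simp
        have "q powr (- real (K + m)) = inverse (q powr real (K + m))" by (rule powr_minus)
        also have "q powr real (K + m) = q ^ (K + m)" by (rule powr_realpow[OF q(1)])
        finally have "q powr (- real (K + m)) = inverse (q ^ (K + m))" .
        moreover have "(1 / q) ^ (K + m) = inverse (q ^ (K + m))" by (simp add: power_one_over inverse_eq_divide)
        ultimately show ?thesis unfolding qe by simp
      qed
      finally have cle: "c ^ K \<le> (1 - 3 * Lf * h) powr (- real (K + m))" .
      show "c ^ K * (\<integral>\<omega>. z K \<omega> \<partial>M) \<le> T (K + m)"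
        unfolding T_def using cle zle c1 by (intro mult_mono) (auto simp: z_def)
    qed
    show ?thesis
      by (rule real_tendsto_sandwich[where f="\<lambda>K. 0" and h="\<lambda>K. T (K + m)"]) (use b TK in auto)
  qed
  show ?thesis
  proof -
    interpret S0: sigma_finite_subalgebra M "F (u 0)" by (rule sfs)
    have Gm[measurable]: "G \<in> borel_measurable M" using G(1) by auto
    have EGi: "integrable M (E 0 G)" by (rule Ei[OF G(1)])
    have cai: "integrable M (\<lambda>\<omega>. c ^ k * a k \<omega>)" for k using ai by auto
    have r1: "AE \<omega> in M. z 0 \<omega> \<le> E 0 G \<omega> + c ^ K * E 0 (z K) \<omega>" for K
    proof -
      have p2a: "AE \<omega> in M. E 0 (\<lambda>\<omega>. \<Sum>k<K. c ^ k * a k \<omega>) \<omega> = (\<Sum>k<K. E 0 (\<lambda>\<omega>. c ^ k * a k \<omega>) \<omega>)"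
        unfolding E_def by (rule S0.real_cond_exp_sum[of "\<lambda>k \<omega>. c ^ k * a k \<omega>"]) (use cai in auto)
      have p2b: "AE \<omega> in M. \<forall>k. E 0 (\<lambda>\<omega>. c ^ k * a k \<omega>) \<omega> = c ^ k * E 0 (a k) \<omega>"
        unfolding AE_all_countable E_def by (intro allI S0.real_cond_exp_cmult ai)
      have sK: "AE \<omega> in M. (\<Sum>k<K. c ^ k * a k \<omega>) \<le> G \<omega>" using s3 by eventually_elim auto
      have p3: "AE \<omega> in M. E 0 (\<lambda>\<omega>. \<Sum>k<K. c ^ k * a k \<omega>) \<omega> \<le> E 0 G \<omega>"
        unfolding E_def by (rule S0.real_cond_exp_mono[OF sK]) (use cai G(1) in auto)
      show ?thesis using s2[of K] p2a p2b p3
      proof eventually_elim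
        case (elim \<omega>)
        have "(\<Sum>k<K. c ^ k * E 0 (a k) \<omega>) = (\<Sum>k<K. E 0 (\<lambda>\<omega>. c ^ k * a k \<omega>) \<omega>)"
          using elim(3) by simp
        then show ?case using elim(1,2,4) by linarith
      qed
    qed
    define D where "D \<omega> = max (z 0 \<omega> - E 0 G \<omega>) 0" for \<omega>
    have Dm[measurable]: "D \<in> borel_measurable M" unfolding D_def E_def by measurable
    have Di: "integrable M D"
      unfolding D_def by (intro integrable_max Bochner_Integration.integrable_diff zi EGi) simp
    have Dle: "(\<integral>\<omega>. D \<omega> \<partial>M) \<le> c ^ K * (\<integral>\<omega>. z K \<omega> \<partial>M)" for K
    proof -
      have pos: "AE \<omega> in M. E 0 (z K) \<omega> \<ge> 0"
        unfolding E_def by (rule S0.real_cond_exp_pos) (auto simp: z_def)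
      have "(\<integral>\<omega>. D \<omega> \<partial>M) \<le> (\<integral>\<omega>. c ^ K * E 0 (z K) \<omega> \<partial>M)"
      proof (rule integral_mono_AE)
        show "integrable M (\<lambda>\<omega>. c ^ K * E 0 (z K) \<omega>)" using Ei[OF zi] by auto
        show "AE \<omega> in M. D \<omega> \<le> c ^ K * E 0 (z K) \<omega>"
          using r1[of K] pos
        proof eventually_elim
          case (elim \<omega>)
          then show ?case unfolding D_def using c1 by (auto intro: mult_nonneg_nonneg)
        qed
      qed (rule Di)
      also have "\<dots> = c ^ K * (\<integral>\<omega>. E 0 (z K) \<omega> \<partial>M)" by simp
      also have "(\<integral>\<omega>. E 0 (z K) \<omega> \<partial>M) = (\<integral>\<omega>. z K \<omega> \<partial>M)"
        unfolding E_def by (rule S0.real_cond_exp_int(2)[OF zi])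
      finally show ?thesis .
    qed
    have "(\<integral>\<omega>. D \<omega> \<partial>M) \<le> 0"
      by (rule LIMSEQ_le_const[OF s4]) (use Dle in blast)
    moreover have Dnn: "AE \<omega> in M. 0 \<le> D \<omega>" by (auto simp: D_def)
    ultimately have "(\<integral>\<omega>. D \<omega> \<partial>M) = 0" using integral_nonneg_AE[OF Dnn] by linarith
    then have "AE \<omega> in M. D \<omega> = 0" using integral_nonneg_eq_0_iff_AE[OF Di Dnn] by simp
    then show ?thesis
      by eventually_elim (auto simp: D_def z_def E_def u0)
  qed
qed

end



lemma powr_sum_le:
  fixes x y s :: real
  assumes "x \<ge> 0" "y \<ge> 0" "s \<ge> 0"
  shows "(x + y) powr s \<le> 2 powr s * (x powr s + y powr s)"
proof -
  define w where "w = max x y"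
  have "x + y \<le> 2 * w" unfolding w_def by auto
  then have "(x + y) powr s \<le> (2 * w) powr s" using assms by (intro powr_mono2) auto
  also have "\<dots> = 2 powr s * w powr s" using assms unfolding w_def by (simp add: powr_mult)
  also have "w powr s \<le> x powr s + y powr s" unfolding w_def by (auto simp: max_def)
  then have "2 powr s * w powr s \<le> 2 powr s * (x powr s + y powr s)" by (intro mult_left_mono) auto
  finally show ?thesis .
qed

lemma amgm_powr:
  fixes x y a b :: real
  assumes "x \<ge> 0" "y \<ge> 0" "a \<ge> 0" "b \<ge> 0" "a + b \<le> 1"
  shows "x powr a * y powr b \<le> x + y + 1"
proof -
  define w where "w = max (max x y) 1"
  have w1: "w \<ge> 1" unfolding w_def by auto
  have "x powr a \<le> w powr a" using assms unfolding w_def by (intro powr_mono2) auto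
  moreover have "y powr b \<le> w powr b" using assms unfolding w_def by (intro powr_mono2) auto
  ultimately have "x powr a * y powr b \<le> w powr a * w powr b" by (intro mult_mono) auto
  also have "\<dots> = w powr (a + b)" by (simp add: powr_add)
  also have "\<dots> \<le> w powr 1" using w1 assms by (intro powr_mono) auto
  also have "\<dots> = w" using w1 by simp
  also have "w \<le> x + y + 1" unfolding w_def using assms by auto
  finally show ?thesis .
qed

lemma root_bound:
  fixes x p Z :: real
  assumes "x \<ge> 0" "p > 0" "x powr p \<le> Z"
  shows "x \<le> Z powr (1 / p)"
proof (cases "x = 0")
  case True
  then show ?thesis by simp
next
  case False
  then have "x = (x powr p) powr (1 / p)" using assms by (simp add: powr_powr)
  also have "\<dots> \<le> Z powr (1 / p)" using assms by (intro powr_mono2) auto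
  finally show ?thesis .
qed

lemma lin_exp_bound:
  fixes L x :: real
  assumes "L > 0" "x \<ge> 0"
  shows "x \<le> (3 / L) * exp (L * x / 3)"
proof -
  have "L * x / 3 \<le> exp (L * x / 3)" using exp_ge_add_one_self[of "L * x / 3"] by linarith
  then have "(3 / L) * (L * x / 3) \<le> (3 / L) * exp (L * x / 3)" using assms by (intro mult_left_mono) auto
  then show ?thesis using assms by simp
qed

lemma exp_powr_eq: "exp (r * x) powr (k / r) = exp (k * x)" if "r > 0" for r k x :: real
  using that by (simp add: powr_def)

lemma small_powr: fixes z e :: real assumes "z \<ge> 0" "0 \<le> e" "e \<le> 1" shows "z powr e \<le> 1 + z"
proof (cases "z \<le> 1")
  case True then have "z powr e \<le> 1" using assms by (intro powr_le1) auto
  then show ?thesis using assms by simp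
next
  case False then have "z powr e \<le> z powr 1" using assms by (intro powr_mono) auto
  then show ?thesis using False by simp
qed

lemma xi_q_bound: fixes x q Z :: real assumes "q > 0" "\<bar>x\<bar> powr (2 * q) \<le> Z" shows "\<bar>x\<bar> powr q \<le> 1 + Z"
proof (cases "\<bar>x\<bar> \<le> 1")
  case True then have "\<bar>x\<bar> powr q \<le> 1" using assms by (intro powr_le1) auto
  moreover have "Z \<ge> 0" using assms(2) powr_ge_zero[of "\<bar>x\<bar>" "2 * q"] by linarith
  ultimately show ?thesis by simp
next
  case False then have "\<bar>x\<bar> powr q \<le> \<bar>x\<bar> powr (2 * q)" using assms by (intro powr_mono) auto
  moreover have "\<bar>x\<bar> powr q \<ge> 0" by simp
  ultimately show ?thesis using assms by linarith
qed

theorem mainTheorem15: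
  fixes M :: "'a measure" and W :: "real \<Rightarrow> 'a \<Rightarrow> real ^ ('d::finite)"
    and tau :: "'a \<Rightarrow> real" and Lf h0 q p :: real
    and tauh :: "real \<Rightarrow> 'a \<Rightarrow> real" and xi :: "real \<Rightarrow> 'a \<Rightarrow> real"
    and f :: "real \<Rightarrow> real \<Rightarrow> 'a \<Rightarrow> real \<Rightarrow> real"
    and Ys :: "real \<Rightarrow> real \<Rightarrow> 'a \<Rightarrow> real"
  defines "F \<equiv> bm_filtration M W"
  assumes prob: "prob_space M"
    and bm: "brownian_motion M W"
    and tau_st: "stopping_time F tau" and tau_nonneg: "\<forall>\<omega>\<in>space M. tau \<omega> \<ge> 0"
    and Lf_pos: "Lf > 0"
    and q: "q \<ge> 4"
    \<comment> \<open>(h)\<close>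
    and h0: "0 < h0" "h0 < min Lf (1 / (12 * Lf))"
    \<comment> \<open>tau_h: finite pi_h-valued stopping times\<close>
    and tauh_st: "\<forall>h\<in>{0<..h0}. stopping_time F (tauh h)"
    and tauh_grid: "\<forall>h\<in>{0<..h0}. \<forall>\<omega>\<in>space M. tauh h \<omega> \<in> grid h"
    \<comment> \<open>(R-q)\<close>
    and Rq: "\<exists>\<rho>>4 * q * Lf. integrable M (\<lambda>\<omega>. exp (\<rho> * tau \<omega>)) \<and>
               (\<exists>Z. integrable M Z \<and>
                  (\<forall>h\<in>{0<..h0}. AE \<omega> in M. exp (\<rho> * tauh h \<omega>) \<le> Z \<omega>))"
    \<comment> \<open>(pi-F) with p > 2q\<close>
    and p: "p > 2 * q"
    and f_lip: "\<forall>h\<in>{0<..h0}. \<forall>t\<in>grid h. \<forall>\<omega> x y. \<bar>f h t \<omega> x - f h t \<omega> y\<bar> \<le> Lf * \<bar>x - y\<bar>"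
    and f_meas: "\<forall>h\<in>{0<..h0}. \<forall>t\<in>grid h. \<forall>A. A \<in> borel_measurable (F t) \<longrightarrow>
                   (\<lambda>\<omega>. f h t \<omega> (A \<omega>)) \<in> borel_measurable (F t)"
    and f_int: "\<exists>Z. integrable M Z \<and> (\<forall>h\<in>{0<..h0}. \<forall>t\<in>grid h.
                   AE \<omega> in M. t \<le> max (tau \<omega>) (tauh h \<omega>) \<longrightarrow> \<bar>f h t \<omega> 0\<bar> powr p \<le> Z \<omega>)"
    \<comment> \<open>(pi-T) with p = 2q\<close>
    and xi_meas: "\<forall>h\<in>{0<..h0}. xi h \<in> borel_measurable (filtration.pre_sigma (space M) F (tauh h))"
    and xi_int: "\<exists>Z. integrable M Z \<and>
                   (\<forall>h\<in>{0<..h0}. AE \<omega> in M. \<bar>xi h \<omega>\<bar> powr (2 * q) \<le> Z \<omega>)"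
    \<comment> \<open>Ys h is the fixed point of T defining the discrete approximation\<close>
    and fixp: "\<forall>h\<in>{0<..h0}. disc_fixpoint M F Lf h (tauh h) (xi h) (f h) (Ys h)"
  shows "\<exists>Z. integrable M Z \<and>
           (\<forall>h\<in>{0<..h0}. \<forall>t\<in>grid h.
              AE \<omega> in M. \<bar>disc_approx (tauh h) (xi h) (Ys h) t \<omega>\<bar> powr q \<le> Z \<omega>)"
proof -
  interpret bfilt M F unfolding F_def by (rule bmf_bfilt[OF prob bm])
  obtain \<rho> Zr where rho: "\<rho> > 4 * q * Lf" and Zr: "integrable M Zr"
    "\<forall>h\<in>{0<..h0}. AE \<omega> in M. exp (\<rho> * tauh h \<omega>) \<le> Zr \<omega>" using Rq by blast
  obtain Zf0 where Zf0: "integrable M Zf0" "\<forall>h\<in>{0<..h0}. \<forall>t\<in>grid h.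
                   AE \<omega> in M. t \<le> max (tau \<omega>) (tauh h \<omega>) \<longrightarrow> \<bar>f h t \<omega> 0\<bar> powr p \<le> Zf0 \<omega>"
    using f_int by blast
  obtain Zx0 where Zx0: "integrable M Zx0" "\<forall>h\<in>{0<..h0}. AE \<omega> in M. \<bar>xi h \<omega>\<bar> powr (2 * q) \<le> Zx0 \<omega>"
    using xi_int by blast
  define Zrr where "Zrr \<omega> = \<bar>Zr \<omega>\<bar>" for \<omega>
  define Zf where "Zf \<omega> = \<bar>Zf0 \<omega>\<bar>" for \<omega>
  define Zx where "Zx \<omega> = \<bar>Zx0 \<omega>\<bar>" for \<omega>
  have Zrm[measurable]: "Zrr \<in> borel_measurable M" unfolding Zrr_def using Zr(1) by auto
  have Zfm[measurable]: "Zf \<in> borel_measurable M" unfolding Zf_def using Zf0(1) by auto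
  have Zxm[measurable]: "Zx \<in> borel_measurable M" unfolding Zx_def using Zx0(1) by auto
  have Zri: "integrable M Zrr" unfolding Zrr_def using Zr(1) by auto
  have Zfi: "integrable M Zf" unfolding Zf_def using Zf0(1) by auto
  have Zxi: "integrable M Zx" unfolding Zx_def using Zx0(1) by auto
  have Zpos: "Zrr \<omega> \<ge> 0" "Zf \<omega> \<ge> 0" "Zx \<omega> \<ge> 0" for \<omega> unfolding Zrr_def Zf_def Zx_def by auto
  have q0: "q > 0" using q by simp
  have p0: "p > 0" "p > 2 * q" using p q by auto
  have "4 * q * Lf > 0" using Lf_pos q0 by simp
  then have rho0: "\<rho> > 0" using rho by linarith
  define kap where "kap = 3/2 * Lf"
  define den where "den = kap / \<rho> + 1 / (2 * q)"
  define s where "s = 1 / den"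
  have den0: "den > 0" unfolding den_def kap_def using Lf_pos rho0 q0 by (intro add_pos_pos) auto
  have qden: "q * den < 1"
  proof -
    have "q * Lf / \<rho> < 1/4" using rho rho0 by (simp add: field_simps)
    moreover have "q * kap / \<rho> = 3/2 * (q * Lf / \<rho>)" unfolding kap_def by simp
    moreover have H: "\<And>x y::real. x < 1/4 \<Longrightarrow> y = 3/2 * x \<Longrightarrow> y < 3/8" by linarith
    ultimately have "q * kap / \<rho> < 3/8" by blast
    moreover have "q * den = q * kap / \<rho> + 1/2" unfolding den_def using q0 by (simp add: field_simps)
    ultimately show ?thesis by linarith
  qed
  have sq: "s > q" unfolding s_def using qden den0 by (simp add: field_simps)
  have s1: "s \<ge> 1" using sq q by simp
  have sden: "s * den = 1" unfolding s_def using den0 by simp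
  have alpha: "kap / \<rho> * s + s / (2 * q) = 1" using sden unfolding den_def by (simp add: algebra_simps)
  have alpha2: "kap / \<rho> * s + s / p \<le> 1"
  proof -
    have "s / p \<le> s / (2 * q)" using p0 q0 s1 by (intro divide_left_mono) auto
    then show ?thesis using alpha by linarith
  qed
  have kap0: "kap / \<rho> \<ge> 0" unfolding kap_def using Lf_pos rho0 by simp
  define C where "C = 3 / Lf"
  have C0: "C > 0" unfolding C_def using Lf_pos by simp
  define Bf where "Bf \<omega> = Zf \<omega> powr (1 / p)" for \<omega>
  define Bx where "Bx \<omega> = Zx \<omega> powr (1 / (2 * q))" for \<omega>
  define G where "G \<omega> = Zrr \<omega> powr (kap / \<rho>) * (Bx \<omega> + C * Bf \<omega>)" for \<omega>
  define X where "X \<omega> = G \<omega> + 1" for \<omega>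
  define Y where "Y \<omega> = X \<omega> powr s" for \<omega>
  have Bfm[measurable]: "Bf \<in> borel_measurable M" unfolding Bf_def by measurable
  have Bxm[measurable]: "Bx \<in> borel_measurable M" unfolding Bx_def by measurable
  have Gm[measurable]: "G \<in> borel_measurable M" unfolding G_def by measurable
  have Xm[measurable]: "X \<in> borel_measurable M" unfolding X_def by measurable
  have Ym[measurable]: "Y \<in> borel_measurable M" unfolding Y_def by measurable
  have B0: "Bf \<omega> \<ge> 0" "Bx \<omega> \<ge> 0" for \<omega> unfolding Bf_def Bx_def by auto
  have G0: "G \<omega> \<ge> 0" for \<omega> unfolding G_def using B0 C0 by auto
  have X1: "X \<omega> \<ge> 1" for \<omega> unfolding X_def using G0 by auto
  have Yint: "integrable M Y"
  proof -
    define K1 where "K1 = 2 powr s * (2 powr s * (1 + C powr s) + 1)"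
    have K1: "K1 \<ge> 0" unfolding K1_def by simp
    have pt: "Y \<omega> \<le> K1 * (1 + Zrr \<omega> + Zx \<omega> + Zf \<omega>)" for \<omega>
    proof -
      define al where "al = kap / \<rho>"
      have s0: "s \<ge> 0" using s1 by simp
      have W: "(Bx \<omega> + C * Bf \<omega>) powr s \<le> 2 powr s * (Zx \<omega> powr (s / (2 * q)) + C powr s * Zf \<omega> powr (s / p))"
      proof -
        have "(Bx \<omega> + C * Bf \<omega>) powr s \<le> 2 powr s * (Bx \<omega> powr s + (C * Bf \<omega>) powr s)"
          using B0 C0 s0 by (intro powr_sum_le) auto
        moreover have "Bx \<omega> powr s = Zx \<omega> powr (s / (2 * q))" unfolding Bx_def by (simp add: powr_powr)
        moreover have "(C * Bf \<omega>) powr s = C powr s * Zf \<omega> powr (s / p)"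
          unfolding Bf_def using C0 Zpos by (simp add: powr_mult powr_powr)
        ultimately show ?thesis by simp
      qed
      have Gs: "G \<omega> powr s = Zrr \<omega> powr (al * s) * (Bx \<omega> + C * Bf \<omega>) powr s"
        unfolding G_def al_def using Zpos B0 C0 by (simp add: powr_mult powr_powr)
      have als: "al * s \<ge> 0" using kap0 s0 unfolding al_def by (rule mult_nonneg_nonneg)
      have al1: "al * s + s / (2 * q) \<le> 1" using alpha unfolding al_def by simp
      have al2: "al * s + s / p \<le> 1" using alpha2 unfolding al_def by simp
      have sq0: "s / (2 * q) \<ge> 0" "s / p \<ge> 0" using s0 q0 p0 by auto
      have am1: "Zrr \<omega> powr (al * s) * Zx \<omega> powr (s / (2 * q)) \<le> Zrr \<omega> + Zx \<omega> + 1"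
        by (rule amgm_powr[OF Zpos(1) Zpos(3) als sq0(1) al1])
      have am2: "Zrr \<omega> powr (al * s) * Zf \<omega> powr (s / p) \<le> Zrr \<omega> + Zf \<omega> + 1"
        by (rule amgm_powr[OF Zpos(1) Zpos(2) als sq0(2) al2])
      have "G \<omega> powr s \<le> Zrr \<omega> powr (al * s) * (2 powr s * (Zx \<omega> powr (s / (2 * q)) + C powr s * Zf \<omega> powr (s / p)))"
        unfolding Gs using W by (intro mult_left_mono) auto
      also have "\<dots> = 2 powr s * (Zrr \<omega> powr (al * s) * Zx \<omega> powr (s / (2 * q)) + C powr s * (Zrr \<omega> powr (al * s) * Zf \<omega> powr (s / p)))"
        by (simp add: algebra_simps)
      also have "\<dots> \<le> 2 powr s * ((Zrr \<omega> + Zx \<omega> + 1) + C powr s * (Zrr \<omega> + Zf \<omega> + 1))"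
        using am1 am2 by (intro mult_left_mono add_mono) auto
      also have "\<dots> \<le> 2 powr s * ((1 + C powr s) * (1 + Zrr \<omega> + Zx \<omega> + Zf \<omega>))"
        using Zpos by (intro mult_left_mono) (auto simp: algebra_simps)
      finally have Gb: "G \<omega> powr s \<le> 2 powr s * ((1 + C powr s) * (1 + Zrr \<omega> + Zx \<omega> + Zf \<omega>))" .
      have "Y \<omega> \<le> 2 powr s * (G \<omega> powr s + 1 powr s)"
        unfolding Y_def X_def using G0 s0 by (intro powr_sum_le) auto
      also have "\<dots> \<le> 2 powr s * (2 powr s * ((1 + C powr s) * (1 + Zrr \<omega> + Zx \<omega> + Zf \<omega>)) + (1 + Zrr \<omega> + Zx \<omega> + Zf \<omega>))"
        using Gb Zpos by (intro mult_left_mono add_mono) auto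
      also have "\<dots> = K1 * (1 + Zrr \<omega> + Zx \<omega> + Zf \<omega>)" unfolding K1_def by (simp add: algebra_simps)
      finally show ?thesis .
    qed
    show ?thesis
    proof (rule Bochner_Integration.integrable_bound[where f="\<lambda>\<omega>. K1 * (1 + Zrr \<omega> + Zx \<omega> + Zf \<omega>)"])
      show "integrable M (\<lambda>\<omega>. K1 * (1 + Zrr \<omega> + Zx \<omega> + Zf \<omega>))" using Zri Zxi Zfi by auto
      show "AE \<omega> in M. norm (Y \<omega>) \<le> norm (K1 * (1 + Zrr \<omega> + Zx \<omega> + Zf \<omega>))"
      proof (rule AE_I2)
        fix \<omega>
        have "K1 * (1 + Zrr \<omega> + Zx \<omega> + Zf \<omega>) \<ge> 0" using K1 Zpos by simp
        then show "norm (Y \<omega>) \<le> norm (K1 * (1 + Zrr \<omega> + Zx \<omega> + Zf \<omega>))" using pt[of \<omega>] by (simp add: Y_def)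
      qed
    qed simp
  qed
  have XleY: "X \<omega> \<le> Y \<omega>" for \<omega>
  proof -
    have "X \<omega> powr 1 \<le> X \<omega> powr s" using X1 s1 by (intro powr_mono) auto
    then show ?thesis unfolding Y_def using X1 by simp
  qed
  have Xint: "integrable M X"
  proof (rule Bochner_Integration.integrable_bound[OF Yint])
    show "AE x in M. norm (X x) \<le> norm (Y x)"
    proof (rule AE_I2)
      fix x
      have "\<bar>X x\<bar> = X x" using X1[of x] by simp
      moreover have "\<bar>Y x\<bar> = Y x" unfolding Y_def by simp
      ultimately show "norm (X x) \<le> norm (Y x)" using XleY[of x] by simp
    qed
  qed simp
  have Gint: "integrable M G"
  proof (rule Bochner_Integration.integrable_bound[OF Xint])
    show "AE x in M. norm (G x) \<le> norm (X x)"
      by (rule AE_I2) (use G0 in \<open>auto simp: X_def\<close>)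
  qed simp
  have Y0: "AE x in M. Y x \<ge> 0" unfolding Y_def by simp
  have LC: "\<And>t A e. t > 0 \<Longrightarrow> A \<in> sets (F t) \<Longrightarrow> e > 0 \<Longrightarrow>
          \<exists>s\<in>Dq. s < t \<and> (\<exists>A'\<in>sets (F s). measure M ((A - A') \<union> (A' - A)) < e)"
    unfolding F_def by (rule bmf_LC[OF prob bm])
  obtain Zd where Zd: "integrable M Zd"
    "\<forall>t\<ge>0. AE x in M. max (real_cond_exp M (F t) Y x) 0 powr (q / s) \<le> Zd x"
  proof -
    have "0 < q / s" "q / s < 1" using sq q0 by auto
    from doob_dom[OF LC Yint Y0 this] show ?thesis using that by blast
  qed
  define Z where "Z \<omega> = 1 + Zx \<omega> + Zd \<omega>" for \<omega>
  have Zint: "integrable M Z" unfolding Z_def using Zxi Zd(1) by auto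
  have main: "AE \<omega> in M. \<bar>disc_approx (tauh h) (xi h) (Ys h) t \<omega>\<bar> powr q \<le> Z \<omega>"
    if hh: "h \<in> {0<..h0}" and t: "t \<in> grid h" for h t
  proof -
    have h: "0 < h" "h \<le> h0" using hh by auto
    have ah: "Lf * h \<le> 1/12"
    proof -
      have "h0 < 1 / (12 * Lf)" using h0 by simp
      then have "Lf * h0 < Lf * (1 / (12 * Lf))" using Lf_pos by (intro mult_strict_left_mono) auto
      moreover have "Lf * h \<le> Lf * h0" using h Lf_pos by (intro mult_left_mono) auto
      moreover have "Lf * (1 / (12 * Lf)) = 1/12" using Lf_pos by simp
      ultimately show ?thesis by linarith
    qed
    have taum[measurable]: "tauh h \<in> borel_measurable M"
    proof (rule borel_measurableI_le)
      fix y
      have "Measurable.pred (F y) (\<lambda>x. tauh h x \<le> y)"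
        using tauh_st hh unfolding stopping_time_def by blast
      then have "Measurable.pred M (\<lambda>x. tauh h x \<le> y)" by (rule measurable_from_subalg[OF sub])
      then show "{w \<in> space M. tauh h w \<le> y} \<in> sets M" unfolding pred_def by simp
    qed
    have tgrid: "\<forall>\<omega>\<in>space M. tauh h \<omega> \<in> grid h" using tauh_grid hh by blast
    have lip: "\<forall>t\<in>grid h. \<forall>\<omega> x y. \<bar>f h t \<omega> x - f h t \<omega> y\<bar> \<le> Lf * \<bar>x - y\<bar>" using f_lip hh by blast
    have fmeas: "\<forall>t\<in>grid h. (\<lambda>\<omega>. f h t \<omega> 0) \<in> borel_measurable M"
    proof
      fix t' assume "t' \<in> grid h"
      have c0: "(\<lambda>_. 0::real) \<in> borel_measurable (F t')" by simp
      have "\<forall>A. A \<in> borel_measurable (F t') \<longrightarrow> (\<lambda>\<omega>. f h t' \<omega> (A \<omega>)) \<in> borel_measurable (F t')"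
        using f_meas hh \<open>t' \<in> grid h\<close> by blast
      then have "(\<lambda>\<omega>. f h t' \<omega> ((\<lambda>_. 0::real) \<omega>)) \<in> borel_measurable (F t')"
        using c0 by blast
      then show "(\<lambda>\<omega>. f h t' \<omega> 0) \<in> borel_measurable M" by (intro meas_M) simp
    qed
    have fixh: "disc_fixpoint M F Lf h (tauh h) (xi h) (f h) (Ys h)" using fixp hh by blast
    have Bfi: "integrable M Bf"
    proof (rule Bochner_Integration.integrable_bound[where f="\<lambda>\<omega>. 1 + Zf \<omega>"])
      show "integrable M (\<lambda>\<omega>. 1 + Zf \<omega>)" using Zfi by simp
      show "AE \<omega> in M. norm (Bf \<omega>) \<le> norm (1 + Zf \<omega>)"
      proof (rule AE_I2)
        fix \<omega>
        have "p \<ge> 1" using p0 q0 q by linarith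
        then have "Bf \<omega> \<le> 1 + Zf \<omega>" unfolding Bf_def using Zpos p0 by (intro small_powr) auto
        then show "norm (Bf \<omega>) \<le> norm (1 + Zf \<omega>)" using B0 Zpos by simp
      qed
    qed simp
    have Bf3: "\<forall>t\<in>grid h. AE \<omega> in M. t < tauh h \<omega> \<longrightarrow> \<bar>f h t \<omega> 0\<bar> \<le> Bf \<omega>"
    proof
      fix t' assume "t' \<in> grid h"
      then show "AE \<omega> in M. t' < tauh h \<omega> \<longrightarrow> \<bar>f h t' \<omega> 0\<bar> \<le> Bf \<omega>"
        using Zf0(2) hh
      proof -
        have "AE \<omega> in M. t' \<le> max (tau \<omega>) (tauh h \<omega>) \<longrightarrow> \<bar>f h t' \<omega> 0\<bar> powr p \<le> Zf0 \<omega>"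
          using Zf0(2) hh \<open>t' \<in> grid h\<close> by blast
        then show ?thesis
        proof eventually_elim
          case (elim \<omega>)
          show ?case
          proof
            assume "t' < tauh h \<omega>"
            then have "\<bar>f h t' \<omega> 0\<bar> powr p \<le> Zf \<omega>" using elim unfolding Zf_def by auto
            then show "\<bar>f h t' \<omega> 0\<bar> \<le> Bf \<omega>" unfolding Bf_def using p0 by (intro root_bound) auto
          qed
        qed
      qed
    qed
    have Bx2: "AE \<omega> in M. \<bar>xi h \<omega>\<bar> \<le> Bx \<omega>"
      using Zx0(2) hh
    proof -
      have "AE \<omega> in M. \<bar>xi h \<omega>\<bar> powr (2 * q) \<le> Zx0 \<omega>" using Zx0(2) hh by blast
      then show ?thesis
      proof eventually_elim
        case (elim \<omega>)
        then have "\<bar>xi h \<omega>\<bar> powr (2 * q) \<le> Zx \<omega>" unfolding Zx_def by auto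
        then show ?case unfolding Bx_def using q0 by (intro root_bound) auto
      qed
    qed
    have Gdom: "AE \<omega> in M. exp (7/6 * Lf * tauh h \<omega>) * (tauh h \<omega> * Bf \<omega> + Bx \<omega>) \<le> G \<omega>"
    proof -
      have "AE \<omega> in M. exp (\<rho> * tauh h \<omega>) \<le> Zr \<omega>" using Zr(2) hh by blast
      then show ?thesis using AE_space
      proof eventually_elim
        case (elim \<omega>)
        define T where "T = tauh h \<omega>"
        have T0: "T \<ge> 0" using tgrid elim(2) h unfolding T_def grid_iff by auto
        have e1: "exp (\<rho> * T) \<le> Zrr \<omega>" using elim(1) unfolding T_def Zrr_def by auto
        have e2: "exp (kap * T) \<le> Zrr \<omega> powr (kap / \<rho>)"
        proof -
          have "exp (kap * T) = exp (\<rho> * T) powr (kap / \<rho>)" using rho0 by (simp add: exp_powr_eq)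
          also have "\<dots> \<le> Zrr \<omega> powr (kap / \<rho>)" using e1 kap0 by (intro powr_mono2) auto
          finally show ?thesis .
        qed
        have e3: "T * Bf \<omega> \<le> C * exp (Lf * T / 3) * Bf \<omega>"
          using lin_exp_bound[OF Lf_pos T0] B0 unfolding C_def by (intro mult_right_mono) auto
        have "exp (7/6 * Lf * T) * (T * Bf \<omega> + Bx \<omega>) \<le> exp (7/6 * Lf * T) * (C * exp (Lf * T / 3) * Bf \<omega> + Bx \<omega>)"
          using e3 by (intro mult_left_mono) auto
        also have "\<dots> = exp (kap * T) * (C * Bf \<omega>) + exp (7/6 * Lf * T) * Bx \<omega>"
        proof -
          have "exp (7/6 * Lf * T) * exp (Lf * T / 3) = exp (kap * T)"
            unfolding kap_def by (simp add: exp_add[symmetric] algebra_simps)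
          then show ?thesis by (simp add: algebra_simps)
        qed
        also have "\<dots> \<le> exp (kap * T) * (C * Bf \<omega>) + exp (kap * T) * Bx \<omega>"
          using T0 Lf_pos B0 C0 unfolding kap_def by (intro add_mono mult_right_mono) auto
        also have "\<dots> = exp (kap * T) * (Bx \<omega> + C * Bf \<omega>)" by (simp add: algebra_simps)
        also have "\<dots> \<le> Zrr \<omega> powr (kap / \<rho>) * (Bx \<omega> + C * Bf \<omega>)"
          using e2 B0 C0 by (intro mult_right_mono) auto
        finally show ?case unfolding G_def T_def .
      qed
    qed
    have db: "AE \<omega> in M. \<bar>Ys h t \<omega>\<bar> \<le> real_cond_exp M (F t) G \<omega>"
      by (rule disc_bound[OF h(1) Lf_pos ah taum tgrid lip fmeas fixh Bfi _ Bf3 _ Bx2 Gint Gdom t])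
        (use B0 in auto)
    interpret St: sigma_finite_subalgebra M "F t" by (rule sfs)
    have mono: "AE \<omega> in M. real_cond_exp M (F t) G \<omega> \<le> real_cond_exp M (F t) X \<omega>"
      by (rule St.real_cond_exp_mono) (use Gint Xint in \<open>auto simp: X_def\<close>)
    have jens: "AE \<omega> in M. real_cond_exp M (F t) X \<omega> \<in> {0<..}"
      "AE \<omega> in M. (\<lambda>x. x powr s) (real_cond_exp M (F t) X \<omega>) \<le> real_cond_exp M (F t) (\<lambda>x. (\<lambda>x. x powr s) (X x)) \<omega>"
    proof -
      have X0: "AE \<omega> in M. X \<omega> \<in> {0<..}" using X1 by (auto intro: AE_I2 less_le_trans[OF zero_less_one])
      have cv: "convex_on {0<..} (\<lambda>x. x powr s)" by (rule powr_convex[OF s1])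
      have Yi': "integrable M (\<lambda>x. (\<lambda>x. x powr s) (X x))" using Yint unfolding Y_def by simp
      show "AE \<omega> in M. real_cond_exp M (F t) X \<omega> \<in> {0<..}"
        by (rule St.real_cond_exp_jensens_inequality(1)[OF Xint X0 _ Yi' cv]) auto
      show "AE \<omega> in M. (\<lambda>x. x powr s) (real_cond_exp M (F t) X \<omega>) \<le> real_cond_exp M (F t) (\<lambda>x. (\<lambda>x. x powr s) (X x)) \<omega>"
        by (rule St.real_cond_exp_jensens_inequality(2)[OF Xint X0 _ Yi' cv]) auto
    qed
    have t0: "t \<ge> 0" using t h unfolding grid_iff by auto
    have zd: "AE x in M. max (real_cond_exp M (F t) Y x) 0 powr (q / s) \<le> Zd x" using Zd(2) t0 by blast
    have xq: "AE \<omega> in M. \<bar>xi h \<omega>\<bar> powr (2 * q) \<le> Zx0 \<omega>" using Zx0(2) hh by blast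
    show ?thesis using db mono jens zd xq
    proof eventually_elim
      case (elim \<omega>)
      define cx where "cx = real_cond_exp M (F t) X \<omega>"
      define cy where "cy = real_cond_exp M (F t) Y \<omega>"
      have cx0: "cx > 0" using elim(3) unfolding cx_def by simp
      have cxy: "cx powr s \<le> cy" using elim(4) unfolding cx_def cy_def Y_def by simp
      have Zd0: "Zd \<omega> \<ge> 0" using elim(5) powr_ge_zero[of "max cy 0" "q / s"] unfolding cy_def by linarith
      show ?case
      proof (cases "t < tauh h \<omega>")
        case True
        then have da: "disc_approx (tauh h) (xi h) (Ys h) t \<omega> = Ys h t \<omega>" unfolding disc_approx_def by simp
        have ycx: "\<bar>Ys h t \<omega>\<bar> \<le> cx" using elim(1,2) unfolding cx_def by linarith
        have "\<bar>Ys h t \<omega>\<bar> powr q \<le> cx powr q" using ycx q0 by (intro powr_mono2) auto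
        also have "cx powr q = (cx powr s) powr (q / s)" using sq q0 by (simp add: powr_powr)
        also have "\<dots> \<le> cy powr (q / s)" using cxy cx0 sq q0 by (intro powr_mono2) auto
        also have "cy powr (q / s) = max cy 0 powr (q / s)" using cxy cx0
          by (metis max.absorb1 order.trans powr_ge_zero)
        also have "\<dots> \<le> Zd \<omega>" using elim(5) unfolding cy_def .
        finally have "\<bar>Ys h t \<omega>\<bar> powr q \<le> Zd \<omega>" .
        moreover have "Zx \<omega> \<ge> 0" by (rule Zpos(3))
        ultimately show ?thesis unfolding da Z_def by linarith
      next
        case False
        then have da: "disc_approx (tauh h) (xi h) (Ys h) t \<omega> = xi h \<omega>" unfolding disc_approx_def by simp
        have "\<bar>xi h \<omega>\<bar> powr (2 * q) \<le> Zx \<omega>" using elim(6) unfolding Zx_def by auto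
        then have "\<bar>xi h \<omega>\<bar> powr q \<le> 1 + Zx \<omega>" using q0 by (intro xi_q_bound) auto
        then show ?thesis unfolding da Z_def using Zd0 by simp
      qed
    qed
  qed
  show ?thesis using Zint main by blast
qed


end
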